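(* If $X$ is a Cayley graph on a finite abelian group with $X\cong K_3\,\square\,K_3\,\square\,K_2$, then $\mathcal H(X)=\mathcal E(X)$.
   Context: $\square$ denotes the Cartesian product of graphs; $K_n$ is the complete graph on $n$ vertices. For a Cayley graph $X=\mathrm{Cay}(G;S)$ (vertex set $G$, edges $\{g,gs\}$), a flow is $f:G\times S\to\mathbb Z$ with $f(v,s)=-f(vs,s^{-1})$ and $\sum_sf(v,s)=0$; $\mathcal E(X)$ is the group of flows whose edge-flows (one orientation per edge) have even sum; oriented cycles are identified with flows ($1$ on their oriented edges, $-1$ on reversals); $\mathcal H(X)$ is the subgroup generated by oriented hamiltonian cycles. *)

theory Defs
  imports Main
begin

type_synonym 'v sgraph = "'v set \<times> ('v \<Rightarrow> 'v \<Rightarrow> bool)"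

definition complete_graph :: "nat \<Rightarrow> nat sgraph" where
  "complete_graph n = ({..<n}, \<lambda>x y. x \<noteq> y)"

definition cart_prod_graph :: "'a sgraph \<Rightarrow> 'b sgraph \<Rightarrow> ('a \<times> 'b) sgraph" where
  "cart_prod_graph G H =
     (fst G \<times> fst H,
      \<lambda>(x1, y1) (x2, y2). (snd G x1 x2 \<and> y1 = y2) \<or> (x1 = x2 \<and> snd H y1 y2))"

definition graph_iso :: "'a sgraph \<Rightarrow> 'b sgraph \<Rightarrow> bool" where
  "graph_iso G H \<longleftrightarrow> (\<exists>\<phi>. bij_betw \<phi> (fst G) (fst H) \<and>
      (\<forall>x\<in>fst G. \<forall>y\<in>fst G. snd G x y \<longleftrightarrow> snd H (\<phi> x) (\<phi> y)))"

definition cayley_graph :: "'a::ab_group_add set \<Rightarrow> 'a sgraph" where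
  "cayley_graph S = (UNIV, \<lambda>g h. h - g \<in> S)"

definition cayley_edges :: "'a::ab_group_add set \<Rightarrow> 'a set set" where
  "cayley_edges S = {{g, g + s} | g s. s \<in> S}"

text \<open>Flows f : G \<times> S \<rightarrow> Z, represented as f v s (and 0 for s not in S).\<close>
definition is_flow :: "'a::ab_group_add set \<Rightarrow> ('a \<Rightarrow> 'a \<Rightarrow> int) \<Rightarrow> bool" where
  "is_flow S f \<longleftrightarrow> (\<forall>v s. s \<notin> S \<longrightarrow> f v s = 0)
     \<and> (\<forall>v. \<forall>s\<in>S. f v s = - f (v + s) (- s))
     \<and> (\<forall>v. (\<Sum>s\<in>S. f v s) = 0)"

text \<open>Flow on an edge, with respect to a (chosen) orientation of the edge.\<close>
definition edge_flow :: "'a::ab_group_add set \<Rightarrow> ('a \<Rightarrow> 'a \<Rightarrow> int) \<Rightarrow> 'a set \<Rightarrow> int" where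
  "edge_flow S f e =
     (let p = (SOME p. e = {fst p, snd p} \<and> snd p - fst p \<in> S) in f (fst p) (snd p - fst p))"

definition E_flows :: "'a::ab_group_add set \<Rightarrow> ('a \<Rightarrow> 'a \<Rightarrow> int) set" where
  "E_flows S = {f. is_flow S f \<and> even (\<Sum>e\<in>cayley_edges S. edge_flow S f e)}"

definition ham_cycle :: "'a::{ab_group_add,finite} set \<Rightarrow> 'a list \<Rightarrow> bool" where
  "ham_cycle S vs \<longleftrightarrow> distinct vs \<and> set vs = UNIV \<and> length vs \<ge> 3 \<and>
     (\<forall>i < length vs. vs ! ((i + 1) mod length vs) - vs ! i \<in> S)"

definition cycle_flow :: "'a::ab_group_add list \<Rightarrow> 'a \<Rightarrow> 'a \<Rightarrow> int" where
  "cycle_flow vs = (\<lambda>v s.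
     if \<exists>i < length vs. v = vs ! i \<and> s = vs ! ((i + 1) mod length vs) - v then 1
     else if \<exists>i < length vs. v = vs ! ((i + 1) mod length vs) \<and> s = vs ! i - v then -1
     else 0)"

inductive_set int_span :: "('a \<Rightarrow> 'b \<Rightarrow> int) set \<Rightarrow> ('a \<Rightarrow> 'b \<Rightarrow> int) set"
  for C where
  zero: "(\<lambda>v s. 0) \<in> int_span C"
| gen: "c \<in> C \<Longrightarrow> c \<in> int_span C"
| add: "f \<in> int_span C \<Longrightarrow> g \<in> int_span C \<Longrightarrow> (\<lambda>v s. f v s + g v s) \<in> int_span C"
| neg: "f \<in> int_span C \<Longrightarrow> (\<lambda>v s. - f v s) \<in> int_span C"

definition H_flows :: "'a::{ab_group_add,finite} set \<Rightarrow> ('a \<Rightarrow> 'a \<Rightarrow> int) set" where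
  "H_flows S = int_span {cycle_flow vs | vs. ham_cycle S vs}"

end

theory Submission
  imports Defs
begin


definition enc3 :: "nat \<Rightarrow> nat \<Rightarrow> nat \<Rightarrow> nat" where
  "enc3 a b c = a + 3 * b + 9 * c"

definition nbrs :: "nat \<Rightarrow> nat list" where
  "nbrs n = [enc3 ((n mod 3 + 1) mod 3) (n div 3 mod 3) (n div 9),
             enc3 ((n mod 3 + 2) mod 3) (n div 3 mod 3) (n div 9),
             enc3 (n mod 3) ((n div 3 mod 3 + 1) mod 3) (n div 9),
             enc3 (n mod 3) ((n div 3 mod 3 + 2) mod 3) (n div 9),
             enc3 (n mod 3) (n div 3 mod 3) (1 - n div 9)]"

definition adj :: "nat \<Rightarrow> nat \<Rightarrow> bool" where
  "adj i j \<longleftrightarrow> i < 18 \<and> j \<in> set (nbrs i)"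

definition ccf :: "nat list \<Rightarrow> nat \<Rightarrow> nat \<Rightarrow> int" where
  "ccf cs i j = (if (i, j) \<in> set (zip cs (rotate1 cs)) then 1
                 else if (j, i) \<in> set (zip cs (rotate1 cs)) then -1 else 0)"

lemma l18: "(i::nat) < 18 \<Longrightarrow> i = 0 \<or> i = 1 \<or> i = 2 \<or> i = 3 \<or> i = 4 \<or> i = 5 \<or> i = 6 \<or> i = 7 \<or> i = 8 \<or> i = 9 \<or> i = 10 \<or> i = 11 \<or> i = 12 \<or> i = 13 \<or> i = 14 \<or> i = 15 \<or> i = 16 \<or> i = 17"
  by presburger

definition lin :: "int list \<Rightarrow> int list \<Rightarrow> int" where
  "lin v xs = sum_list (map2 (*) v xs)"
definition vadd :: "int list \<Rightarrow> int list \<Rightarrow> int list" where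
  "vadd v w = map2 (+) v w"
definition smul :: "int \<Rightarrow> int list \<Rightarrow> int list" where
  "smul a v = map ((*) a) v"
fun comb :: "int list \<Rightarrow> int list list \<Rightarrow> int list" where
  "comb (a # as) (v # vs) = vadd (smul a v) (comb as vs)"
| "comb _ _ = replicate 29 0"

lemma lin_vadd: "length v = length w \<Longrightarrow> lin (vadd v w) xs = lin v xs + lin w xs"
proof (induction v arbitrary: w xs)
  case Nil thus ?case by (simp add: lin_def vadd_def)
next
  case (Cons a v)
  then obtain b w' where w: "w = b # w'" by (cases w) auto
  show ?case
  proof (cases xs)
    case Nil thus ?thesis using w by (simp add: lin_def vadd_def)
  next
    case (Cons x xs')
    have "lin (vadd v w') xs' = lin v xs' + lin w' xs'" using Cons.IH[of w' xs'] Cons.prems w by simp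
    thus ?thesis using w Cons by (simp add: lin_def vadd_def algebra_simps)
  qed
qed

lemma lin_smul: "lin (smul a v) xs = a * lin v xs"
proof (induction v arbitrary: xs)
  case Nil thus ?case by (simp add: lin_def smul_def)
next
  case (Cons b v) thus ?case by (cases xs) (simp_all add: lin_def smul_def algebra_simps)
qed

lemma lin_zero: "lin (replicate n 0) xs = 0"
proof (induction n arbitrary: xs)
  case 0 thus ?case by (simp add: lin_def)
next
  case (Suc n) thus ?case by (cases xs) (simp_all add: lin_def)
qed

lemma length_smul[simp]: "length (smul a v) = length v"
  by (simp add: smul_def)

lemma length_comb: "(\<forall>v\<in>set vs. length v = 29) \<Longrightarrow> length (comb g vs) = 29"
  by (induction g vs rule: comb.induct) (simp_all add: vadd_def smul_def)

lemma comb_lin: "(\<forall>v\<in>set vs. length v = 29) \<Longrightarrow>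
  sum_list (map2 (\<lambda>a v. a * lin v xs) g vs) = lin (comb g vs) xs"
  by (induction g vs rule: comb.induct) (simp_all add: lin_vadd lin_smul length_comb lin_zero)

lemma swap:
  fixes f :: "'b \<Rightarrow> int" and h :: "'c \<Rightarrow> int"
  shows "sum_list (map2 (\<lambda>c cy. c * f cy) (map h vs) cys) = sum_list (map2 (\<lambda>a v. a * h v) (map f cys) vs)"
proof (induction vs arbitrary: cys)
  case Nil thus ?case by simp
next
  case (Cons v vs) thus ?case by (cases cys) (simp_all add: algebra_simps)
qed

definition edgelist :: "(nat \<times> nat) list" where
  "edgelist = [(0, 1), (0, 2), (0, 3), (0, 6), (0, 9), (1, 2), (1, 4), (1, 7), (1, 10), (2, 5), (2, 8), (2, 11), (3, 4), (3, 5), (3, 6), (3, 12), (4, 5), (4, 7), (4, 13), (5, 8), (5, 14), (6, 7), (6, 8), (6, 15), (7, 8), (7, 16), (8, 17), (9, 10), (9, 11), (9, 12), (9, 15), (10, 11), (10, 13), (10, 16), (11, 14), (11, 17), (12, 13), (12, 14), (12, 15), (13, 14), (13, 16), (14, 17), (15, 16), (15, 17), (16, 17)]"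

definition cycles :: "nat list list" where
  "cycles = [[0, 9, 11, 2, 5, 4, 3, 6, 7, 8, 17, 15, 12, 14, 13, 16, 10, 1],
    [0, 6, 8, 7, 1, 4, 3, 5, 2, 11, 10, 13, 12, 14, 17, 16, 15, 9],
    [0, 2, 11, 10, 13, 16, 17, 8, 6, 7, 1, 4, 3, 5, 14, 12, 15, 9],
    [0, 1, 10, 13, 14, 11, 2, 8, 5, 4, 7, 16, 17, 15, 9, 12, 3, 6],
    [0, 2, 8, 7, 16, 17, 11, 10, 13, 14, 12, 9, 15, 6, 3, 5, 4, 1],
    [0, 6, 15, 17, 8, 7, 1, 2, 11, 14, 5, 4, 13, 16, 10, 9, 12, 3],
    [0, 9, 15, 12, 3, 4, 13, 14, 17, 16, 7, 6, 8, 5, 2, 11, 10, 1],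
    [0, 3, 4, 7, 16, 13, 14, 11, 17, 8, 5, 2, 1, 10, 9, 12, 15, 6],
    [0, 9, 15, 6, 7, 4, 5, 3, 12, 13, 14, 11, 2, 8, 17, 16, 10, 1],
    [0, 1, 4, 3, 6, 15, 9, 11, 10, 13, 12, 14, 17, 16, 7, 8, 5, 2],
    [0, 9, 10, 1, 7, 8, 6, 15, 12, 14, 13, 16, 17, 11, 2, 5, 4, 3],
    [0, 2, 11, 14, 13, 12, 9, 10, 16, 17, 15, 6, 8, 7, 1, 4, 5, 3],
    [0, 3, 5, 14, 12, 15, 6, 8, 2, 11, 17, 16, 13, 4, 7, 1, 10, 9],
    [0, 6, 15, 12, 3, 5, 14, 17, 11, 2, 8, 7, 16, 13, 4, 1, 10, 9],
    [0, 1, 10, 16, 13, 14, 5, 3, 4, 7, 6, 8, 17, 15, 12, 9, 11, 2],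
    [0, 3, 12, 15, 9, 10, 1, 7, 4, 5, 14, 13, 16, 17, 11, 2, 8, 6],
    [0, 9, 10, 1, 7, 6, 3, 4, 13, 16, 15, 12, 14, 5, 8, 17, 11, 2],
    [0, 9, 12, 15, 17, 16, 10, 1, 7, 6, 8, 5, 3, 4, 13, 14, 11, 2],
    [0, 3, 6, 8, 17, 16, 15, 9, 11, 10, 13, 12, 14, 5, 4, 7, 1, 2],
    [0, 6, 8, 5, 4, 7, 16, 10, 1, 2, 11, 9, 15, 17, 14, 13, 12, 3],
    [0, 9, 10, 16, 17, 14, 11, 2, 1, 4, 13, 12, 15, 6, 7, 8, 5, 3],
    [0, 6, 7, 8, 2, 1, 10, 9, 15, 12, 14, 11, 17, 16, 13, 4, 5, 3],
    [0, 9, 15, 16, 7, 6, 3, 12, 14, 5, 4, 13, 10, 11, 17, 8, 2, 1],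
    [0, 6, 8, 7, 16, 13, 10, 1, 4, 3, 12, 14, 5, 2, 11, 17, 15, 9],
    [0, 1, 4, 5, 2, 8, 6, 7, 16, 10, 9, 15, 17, 11, 14, 13, 12, 3],
    [0, 2, 11, 10, 16, 13, 12, 14, 17, 8, 7, 1, 4, 5, 3, 6, 15, 9],
    [0, 9, 12, 14, 11, 10, 16, 13, 4, 3, 5, 2, 1, 7, 8, 17, 15, 6],
    [0, 9, 15, 17, 8, 6, 3, 4, 5, 2, 11, 14, 12, 13, 10, 16, 7, 1]]"

definition Cv :: "int list list" where
  "Cv = [[770, -1679, -5037, -4169, -3918, -1419, -1999, -3249, -8038, -3593, -941, 395, 1965, -19, -1711, -1827, 74, -3644, 593, -5028, -7142, -1329, -4452, -507, -740, -4114, -6962, -6640, 0],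
    [283, -620, -1858, -1537, -1445, -523, -738, -1199, -2965, -1326, -348, 145, 724, -7, -631, -674, 28, -1344, 218, -1854, -2634, -490, -1642, -186, -274, -1518, -2568, -2450, 0],
    [-178, 396, 1200, 993, 935, 336, 477, 769, 1911, 855, 224, -88, -466, 9, 409, 432, -18, 861, -136, 1191, 1696, 315, 1060, 121, 179, 973, 1658, 1585, 0],
    [-647, 1394, 4161, 3444, 3234, 1177, 1650, 2693, 6646, 2968, 779, -336, -1626, 7, 1410, 1515, -61, 3022, -499, 4165, 5908, 1099, 3678, 419, 605, 3413, 5752, 5478, 0],
    [-5, 1, -10, -9, -10, -1, -5, -1, -12, -7, -1, -5, 2, -5, -6, 0, 0, 0, -4, -3, -9, -2, -9, -2, -5, 0, -13, -17, 1],
    [275, -599, -1798, -1489, -1399, -507, -714, -1159, -2868, -1282, -337, 140, 701, -7, -611, -652, 27, -1300, 211, -1794, -2548, -474, -1589, -181, -264, -1468, -2485, -2370, 1],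
    [-868, 1886, 5652, 4678, 4395, 1593, 2242, 3648, 9021, 4031, 1056, -446, -2206, 19, 1918, 2051, -83, 4092, -668, 5645, 8016, 1491, 4995, 569, 828, 4620, 7812, 7448, 1],
    [825, -1781, -5322, -4405, -4137, -1504, -2111, -3442, -8499, -3796, -996, 427, 2079, -11, -1804, -1936, 78, -3862, 636, -5324, -7554, -1405, -4704, -536, -775, -4362, -7357, -7008, 0],
    [325, -701, -2094, -1734, -1628, -592, -831, -1354, -3344, -1494, -392, 168, 818, -4, -710, -762, 31, -1520, 250, -2095, -2972, -553, -1851, -211, -305, -1716, -2895, -2758, 1],
    [838, -1821, -5460, -4521, -4247, -1540, -2167, -3523, -8714, -3894, -1020, 430, 2131, -19, -1854, -1981, 80, -3952, 645, -5453, -7743, -1441, -4826, -551, -800, -4462, -7547, -7196, 1],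
    [-677, 1474, 4423, 3661, 3440, 1246, 1755, 2853, 7059, 3155, 826, -347, -1726, 17, 1502, 1604, -65, 3200, -521, 4416, 6272, 1167, 3909, 445, 650, 3612, 6114, 5831, 1],
    [-65, 147, 448, 370, 349, 124, 178, 286, 713, 319, 84, -31, -173, 5, 153, 161, -7, 320, -49, 443, 632, 117, 395, 44, 68, 361, 619, 593, 1],
    [-334, 717, 2133, 1765, 1657, 605, 846, 1384, 3410, 1523, 399, -176, -835, 1, 722, 778, -31, 1553, -259, 2139, 3032, 565, 1886, 215, 310, 1754, 2949, 2807, 0],
    [-3, 15, 54, 44, 43, 13, 22, 31, 83, 38, 10, 1, -19, 4, 20, 17, -1, 33, -2, 48, 72, 13, 47, 5, 11, 38, 74, 74, 0],
    [433, -940, -2812, -2327, -2186, -793, -1116, -1817, -4489, -2006, -527, 223, 1097, -8, -954, -1022, 42, -2038, 333, -2810, -3989, -742, -2485, -282, -412, -2301, -3887, -3705, 0],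
    [-440, 949, 2833, 2345, 2202, 801, 1123, 1833, 4525, 2021, 529, -229, -1108, 5, 960, 1031, -41, 2057, -340, 2836, 4023, 749, 2504, 286, 412, 2323, 3916, 3730, 0],
    [555, -1208, -3626, -3003, -2821, -1022, -1439, -2338, -5786, -2586, -677, 284, 1415, -14, -1232, -1315, 53, -2623, 427, -3620, -5141, -957, -3205, -366, -532, -2961, -5012, -4780, 1],
    [-351, 759, 2274, 1882, 1768, 641, 902, 1468, 3630, 1621, 426, -179, -887, 7, 771, 826, -34, 1647, -269, 2272, 3225, 599, 2009, 228, 332, 1860, 3144, 2996, 1],
    [-1217, 2649, 7944, 6575, 6178, 2238, 3152, 5125, 12677, 5665, 1485, -623, -3099, 29, 2697, 2882, -117, 5748, -936, 7931, 11264, 2095, 7020, 799, 1165, 6490, 10980, 10470, 1],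
    [825, -1791, -5365, -4441, -4172, -1513, -2129, -3464, -8564, -3827, -1003, 424, 2094, -17, -1821, -1948, 79, -3886, 635, -5360, -7610, -1416, -4742, -540, -786, -4387, -7416, -7070, 0],
    [-68, 146, 434, 359, 337, 123, 172, 282, 694, 310, 81, -36, -170, 0, 147, 158, -6, 316, -53, 435, 617, 115, 384, 44, 63, 357, 600, 571, 0],
    [-757, 1638, 4898, 4054, 3808, 1383, 1943, 3166, 7821, 3494, 916, -391, -1913, 12, 1661, 1781, -72, 3552, -583, 4898, 6951, 1293, 4329, 493, 715, 4011, 6771, 6452, 0],
    [-378, 821, 2460, 2036, 1913, 694, 976, 1588, 3926, 1754, 460, -194, -960, 8, 835, 893, -36, 1781, -291, 2457, 3489, 649, 2174, 248, 360, 2012, 3400, 3241, 0],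
    [-625, 1354, 4052, 3353, 3150, 1143, 1607, 2618, 6469, 2890, 758, -322, -1582, 11, 1374, 1472, -60, 2937, -481, 4050, 5749, 1069, 3581, 407, 592, 3316, 5601, 5338, 1],
    [-700, 1518, 4547, 3764, 3536, 1283, 1804, 2936, 7258, 3243, 850, -360, -1775, 14, 1543, 1651, -67, 3294, -539, 4543, 6450, 1200, 4019, 458, 665, 3719, 6285, 5991, 0],
    [506, -1105, -3319, -2747, -2582, -934, -1317, -2139, -5295, -2367, -620, 258, 1294, -14, -1128, -1203, 49, -2399, 389, -3311, -4704, -875, -2933, -334, -488, -2708, -4587, -4376, 0],
    [261, -565, -1689, -1398, -1313, -477, -670, -1092, -2697, -1205, -316, 135, 660, -4, -573, -614, 25, -1225, 201, -1689, -2397, -446, -1493, -170, -247, -1383, -2335, -2225, 0],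
    [78, -176, -535, -443, -417, -149, -213, -342, -852, -382, -99, 39, 208, -5, -183, -192, 8, -383, 60, -530, -756, -141, -473, -54, -81, -432, -739, -708, 0]]"

definition Pv :: "int list" where
  "Pv = [1, 0, 0, 1, 1, 1, 1, 0, 0, 1, 0, 0, 0, 0, 1, 0, 0, 0, 0, 0, 0, 1, 1, 1, 1, 0, 0, 1, -2]"

definition adjpairs :: "(nat \<times> nat) list" where
  "adjpairs = concat (map (\<lambda>i. map (Pair i) (nbrs i)) [0..<18])"

definition tab :: "((nat \<times> nat) \<times> int list \<times> int) list" where
  "tab = [((0, 1), [1, -1, 0, 0, 1, 0, 0, -1, 0, 1, -1, 0, 0, 0, 1, 0, 0, 0, 0, -1, 0, 0, 1, 0, 0, -1, 0, 1, 0], 1),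
    ((0, 2), [-1, 0, -1, 0, -1, 0, 0, 0, -1, -1, 0, -1, 0, 0, -1, 0, 0, 0, 0, 0, -1, 0, -1, 0, 0, 0, -1, -1, 0], 1),
    ((0, 3), [0, 1, 1, 1, 0, 0, 0, 0, 0, 0, 0, 0, -1, 0, 0, 0, 0, 0, 0, 1, 1, 1, 0, 0, 0, 0, 0, 0, 0], 1),
    ((0, 6), [0, 0, 0, -1, 0, 0, 0, 1, 1, 0, 0, 0, 0, -1, 0, 0, 0, 0, 0, 0, 0, -1, 0, 0, 0, 1, 1, 0, 0], -1),
    ((0, 9), [0, 0, 0, 0, 0, 0, 0, 0, 0, 0, 1, 1, 1, 1, 0, 0, 0, 0, 0, 0, 0, 0, 0, 0, 0, 0, 0, 0, 0], -2),
    ((1, 2), [1, 0, 0, 0, 0, 0, 0, 0, 0, 0, 0, 0, 0, 0, 0, 0, 0, 0, 0, 0, 0, 0, 0, 0, 0, 0, 0, 0, 0], -1),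
    ((1, 0), [-1, 1, 0, 0, -1, 0, 0, 1, 0, -1, 1, 0, 0, 0, -1, 0, 0, 0, 0, 1, 0, 0, -1, 0, 0, 1, 0, -1, 0], -1),
    ((1, 4), [0, -1, 0, 0, 1, 1, 0, 0, 0, 0, 0, 0, 0, 0, 0, -1, 0, 0, 0, -1, 0, 0, 1, 1, 0, 0, 0, 0, 0], -1),
    ((1, 7), [0, 0, 0, 0, 0, -1, 0, -1, 0, 1, 0, 0, 0, 0, 0, 0, -1, 0, 0, 0, 0, 0, 0, -1, 0, -1, 0, 1, 0], 0),
    ((1, 10), [0, 0, 0, 0, 0, 0, 0, 0, 0, 0, -1, 0, 0, 0, 1, 1, 1, 0, 0, 0, 0, 0, 0, 0, 0, 0, 0, 0, 0], 3),
    ((2, 0), [1, 0, 1, 0, 1, 0, 0, 0, 1, 1, 0, 1, 0, 0, 1, 0, 0, 0, 0, 0, 1, 0, 1, 0, 0, 0, 1, 1, 0], -1),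
    ((2, 1), [-1, 0, 0, 0, 0, 0, 0, 0, 0, 0, 0, 0, 0, 0, 0, 0, 0, 0, 0, 0, 0, 0, 0, 0, 0, 0, 0, 0, 0], 1),
    ((2, 5), [0, 0, -1, 0, -1, 0, 1, 0, 0, 0, 0, 0, 0, 0, 0, 0, 0, -1, 0, 0, -1, 0, -1, 0, 1, 0, 0, 0, 0], 1),
    ((2, 8), [0, 0, 0, 0, 0, 0, -1, 0, -1, -1, 0, 0, 0, 0, 0, 0, 0, 0, -1, 0, 0, 0, 0, 0, -1, 0, -1, -1, 0], -1),
    ((2, 11), [0, 0, 0, 0, 0, 0, 0, 0, 0, 0, 0, -1, 0, 0, -1, 0, 0, 1, 1, 0, 0, 0, 0, 0, 0, 0, 0, 0, 0], 0),
    ((3, 4), [0, 1, 0, 0, 0, 0, 0, 0, 0, 0, 0, 0, 0, 0, 0, 0, 0, 0, 0, 0, 0, 0, 0, 0, 0, 0, 0, 0, 0], 0),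
    ((3, 5), [0, 0, 1, 0, 0, 0, 0, 0, 0, 0, 0, 0, 0, 0, 0, 0, 0, 0, 0, 0, 0, 0, 0, 0, 0, 0, 0, 0, 0], 1),
    ((3, 6), [0, 0, 0, 1, 0, 0, 0, 0, 0, 0, 0, 0, 0, 0, 0, 0, 0, 0, 0, 0, 0, 0, 0, 0, 0, 0, 0, 0, 0], 0),
    ((3, 0), [0, -1, -1, -1, 0, 0, 0, 0, 0, 0, 0, 0, 1, 0, 0, 0, 0, 0, 0, -1, -1, -1, 0, 0, 0, 0, 0, 0, 0], -1),
    ((3, 12), [0, 0, 0, 0, 0, 0, 0, 0, 0, 0, 0, 0, -1, 0, 0, 0, 0, 0, 0, 1, 1, 1, 0, 0, 0, 0, 0, 0, 0], 0),
    ((4, 5), [0, 0, 0, 0, 1, 0, 0, 0, 0, 0, 0, 0, 0, 0, 0, 0, 0, 0, 0, 0, 0, 0, 0, 0, 0, 0, 0, 0, 0], 1),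
    ((4, 3), [0, -1, 0, 0, 0, 0, 0, 0, 0, 0, 0, 0, 0, 0, 0, 0, 0, 0, 0, 0, 0, 0, 0, 0, 0, 0, 0, 0, 0], 0),
    ((4, 7), [0, 0, 0, 0, 0, 1, 0, 0, 0, 0, 0, 0, 0, 0, 0, 0, 0, 0, 0, 0, 0, 0, 0, 0, 0, 0, 0, 0, 0], 0),
    ((4, 1), [0, 1, 0, 0, -1, -1, 0, 0, 0, 0, 0, 0, 0, 0, 0, 1, 0, 0, 0, 1, 0, 0, -1, -1, 0, 0, 0, 0, 0], 1),
    ((4, 13), [0, 0, 0, 0, 0, 0, 0, 0, 0, 0, 0, 0, 0, 0, 0, -1, 0, 0, 0, -1, 0, 0, 1, 1, 0, 0, 0, 0, 0], -2),
    ((5, 3), [0, 0, -1, 0, 0, 0, 0, 0, 0, 0, 0, 0, 0, 0, 0, 0, 0, 0, 0, 0, 0, 0, 0, 0, 0, 0, 0, 0, 0], -1),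
    ((5, 4), [0, 0, 0, 0, -1, 0, 0, 0, 0, 0, 0, 0, 0, 0, 0, 0, 0, 0, 0, 0, 0, 0, 0, 0, 0, 0, 0, 0, 0], -1),
    ((5, 8), [0, 0, 0, 0, 0, 0, 1, 0, 0, 0, 0, 0, 0, 0, 0, 0, 0, 0, 0, 0, 0, 0, 0, 0, 0, 0, 0, 0, 0], 1),
    ((5, 2), [0, 0, 1, 0, 1, 0, -1, 0, 0, 0, 0, 0, 0, 0, 0, 0, 0, 1, 0, 0, 1, 0, 1, 0, -1, 0, 0, 0, 0], -1),
    ((5, 14), [0, 0, 0, 0, 0, 0, 0, 0, 0, 0, 0, 0, 0, 0, 0, 0, 0, -1, 0, 0, -1, 0, -1, 0, 1, 0, 0, 0, 0], 2),
    ((6, 7), [0, 0, 0, 0, 0, 0, 0, 1, 0, 0, 0, 0, 0, 0, 0, 0, 0, 0, 0, 0, 0, 0, 0, 0, 0, 0, 0, 0, 0], 1),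
    ((6, 8), [0, 0, 0, 0, 0, 0, 0, 0, 1, 0, 0, 0, 0, 0, 0, 0, 0, 0, 0, 0, 0, 0, 0, 0, 0, 0, 0, 0, 0], -2),
    ((6, 0), [0, 0, 0, 1, 0, 0, 0, -1, -1, 0, 0, 0, 0, 1, 0, 0, 0, 0, 0, 0, 0, 1, 0, 0, 0, -1, -1, 0, 0], 1),
    ((6, 3), [0, 0, 0, -1, 0, 0, 0, 0, 0, 0, 0, 0, 0, 0, 0, 0, 0, 0, 0, 0, 0, 0, 0, 0, 0, 0, 0, 0, 0], 0),
    ((6, 15), [0, 0, 0, 0, 0, 0, 0, 0, 0, 0, 0, 0, 0, -1, 0, 0, 0, 0, 0, 0, 0, -1, 0, 0, 0, 1, 1, 0, 0], 0),
    ((7, 8), [0, 0, 0, 0, 0, 0, 0, 0, 0, 1, 0, 0, 0, 0, 0, 0, 0, 0, 0, 0, 0, 0, 0, 0, 0, 0, 0, 0, 0], 1),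
    ((7, 6), [0, 0, 0, 0, 0, 0, 0, -1, 0, 0, 0, 0, 0, 0, 0, 0, 0, 0, 0, 0, 0, 0, 0, 0, 0, 0, 0, 0, 0], -1),
    ((7, 1), [0, 0, 0, 0, 0, 1, 0, 1, 0, -1, 0, 0, 0, 0, 0, 0, 1, 0, 0, 0, 0, 0, 0, 1, 0, 1, 0, -1, 0], 0),
    ((7, 4), [0, 0, 0, 0, 0, -1, 0, 0, 0, 0, 0, 0, 0, 0, 0, 0, 0, 0, 0, 0, 0, 0, 0, 0, 0, 0, 0, 0, 0], 0),
    ((7, 16), [0, 0, 0, 0, 0, 0, 0, 0, 0, 0, 0, 0, 0, 0, 0, 0, -1, 0, 0, 0, 0, 0, 0, -1, 0, -1, 0, 1, 0], 0),
    ((8, 6), [0, 0, 0, 0, 0, 0, 0, 0, -1, 0, 0, 0, 0, 0, 0, 0, 0, 0, 0, 0, 0, 0, 0, 0, 0, 0, 0, 0, 0], 2),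
    ((8, 7), [0, 0, 0, 0, 0, 0, 0, 0, 0, -1, 0, 0, 0, 0, 0, 0, 0, 0, 0, 0, 0, 0, 0, 0, 0, 0, 0, 0, 0], -1),
    ((8, 2), [0, 0, 0, 0, 0, 0, 1, 0, 1, 1, 0, 0, 0, 0, 0, 0, 0, 0, 1, 0, 0, 0, 0, 0, 1, 0, 1, 1, 0], 1),
    ((8, 5), [0, 0, 0, 0, 0, 0, -1, 0, 0, 0, 0, 0, 0, 0, 0, 0, 0, 0, 0, 0, 0, 0, 0, 0, 0, 0, 0, 0, 0], -1),
    ((8, 17), [0, 0, 0, 0, 0, 0, 0, 0, 0, 0, 0, 0, 0, 0, 0, 0, 0, 0, -1, 0, 0, 0, 0, 0, -1, 0, -1, -1, 0], -1),
    ((9, 10), [0, 0, 0, 0, 0, 0, 0, 0, 0, 0, 1, 0, 0, 0, 0, 0, 0, 0, 0, 0, 0, 0, 0, 0, 0, 0, 0, 0, 0], -1),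
    ((9, 11), [0, 0, 0, 0, 0, 0, 0, 0, 0, 0, 0, 1, 0, 0, 0, 0, 0, 0, 0, 0, 0, 0, 0, 0, 0, 0, 0, 0, 0], -1),
    ((9, 12), [0, 0, 0, 0, 0, 0, 0, 0, 0, 0, 0, 0, 1, 0, 0, 0, 0, 0, 0, 0, 0, 0, 0, 0, 0, 0, 0, 0, 0], 0),
    ((9, 15), [0, 0, 0, 0, 0, 0, 0, 0, 0, 0, 0, 0, 0, 1, 0, 0, 0, 0, 0, 0, 0, 0, 0, 0, 0, 0, 0, 0, 0], 0),
    ((9, 0), [0, 0, 0, 0, 0, 0, 0, 0, 0, 0, -1, -1, -1, -1, 0, 0, 0, 0, 0, 0, 0, 0, 0, 0, 0, 0, 0, 0, 0], 2),
    ((10, 11), [0, 0, 0, 0, 0, 0, 0, 0, 0, 0, 0, 0, 0, 0, 1, 0, 0, 0, 0, 0, 0, 0, 0, 0, 0, 0, 0, 0, 0], 2),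
    ((10, 9), [0, 0, 0, 0, 0, 0, 0, 0, 0, 0, -1, 0, 0, 0, 0, 0, 0, 0, 0, 0, 0, 0, 0, 0, 0, 0, 0, 0, 0], 1),
    ((10, 13), [0, 0, 0, 0, 0, 0, 0, 0, 0, 0, 0, 0, 0, 0, 0, 1, 0, 0, 0, 0, 0, 0, 0, 0, 0, 0, 0, 0, 0], -1),
    ((10, 16), [0, 0, 0, 0, 0, 0, 0, 0, 0, 0, 0, 0, 0, 0, 0, 0, 1, 0, 0, 0, 0, 0, 0, 0, 0, 0, 0, 0, 0], 1),
    ((10, 1), [0, 0, 0, 0, 0, 0, 0, 0, 0, 0, 1, 0, 0, 0, -1, -1, -1, 0, 0, 0, 0, 0, 0, 0, 0, 0, 0, 0, 0], -3),
    ((11, 9), [0, 0, 0, 0, 0, 0, 0, 0, 0, 0, 0, -1, 0, 0, 0, 0, 0, 0, 0, 0, 0, 0, 0, 0, 0, 0, 0, 0, 0], 1),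
    ((11, 10), [0, 0, 0, 0, 0, 0, 0, 0, 0, 0, 0, 0, 0, 0, -1, 0, 0, 0, 0, 0, 0, 0, 0, 0, 0, 0, 0, 0, 0], -2),
    ((11, 14), [0, 0, 0, 0, 0, 0, 0, 0, 0, 0, 0, 0, 0, 0, 0, 0, 0, 1, 0, 0, 0, 0, 0, 0, 0, 0, 0, 0, 0], 0),
    ((11, 17), [0, 0, 0, 0, 0, 0, 0, 0, 0, 0, 0, 0, 0, 0, 0, 0, 0, 0, 1, 0, 0, 0, 0, 0, 0, 0, 0, 0, 0], 1),
    ((11, 2), [0, 0, 0, 0, 0, 0, 0, 0, 0, 0, 0, 1, 0, 0, 1, 0, 0, -1, -1, 0, 0, 0, 0, 0, 0, 0, 0, 0, 0], 0),
    ((12, 13), [0, 0, 0, 0, 0, 0, 0, 0, 0, 0, 0, 0, 0, 0, 0, 0, 0, 0, 0, 1, 0, 0, 0, 0, 0, 0, 0, 0, 0], 1),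
    ((12, 14), [0, 0, 0, 0, 0, 0, 0, 0, 0, 0, 0, 0, 0, 0, 0, 0, 0, 0, 0, 0, 1, 0, 0, 0, 0, 0, 0, 0, 0], -2),
    ((12, 15), [0, 0, 0, 0, 0, 0, 0, 0, 0, 0, 0, 0, 0, 0, 0, 0, 0, 0, 0, 0, 0, 1, 0, 0, 0, 0, 0, 0, 0], 1),
    ((12, 9), [0, 0, 0, 0, 0, 0, 0, 0, 0, 0, 0, 0, -1, 0, 0, 0, 0, 0, 0, 0, 0, 0, 0, 0, 0, 0, 0, 0, 0], 0),
    ((12, 3), [0, 0, 0, 0, 0, 0, 0, 0, 0, 0, 0, 0, 1, 0, 0, 0, 0, 0, 0, -1, -1, -1, 0, 0, 0, 0, 0, 0, 0], 0),
    ((13, 14), [0, 0, 0, 0, 0, 0, 0, 0, 0, 0, 0, 0, 0, 0, 0, 0, 0, 0, 0, 0, 0, 0, 1, 0, 0, 0, 0, 0, 0], -1),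
    ((13, 12), [0, 0, 0, 0, 0, 0, 0, 0, 0, 0, 0, 0, 0, 0, 0, 0, 0, 0, 0, -1, 0, 0, 0, 0, 0, 0, 0, 0, 0], -1),
    ((13, 16), [0, 0, 0, 0, 0, 0, 0, 0, 0, 0, 0, 0, 0, 0, 0, 0, 0, 0, 0, 0, 0, 0, 0, 1, 0, 0, 0, 0, 0], -1),
    ((13, 10), [0, 0, 0, 0, 0, 0, 0, 0, 0, 0, 0, 0, 0, 0, 0, -1, 0, 0, 0, 0, 0, 0, 0, 0, 0, 0, 0, 0, 0], 1),
    ((13, 4), [0, 0, 0, 0, 0, 0, 0, 0, 0, 0, 0, 0, 0, 0, 0, 1, 0, 0, 0, 1, 0, 0, -1, -1, 0, 0, 0, 0, 0], 2),
    ((14, 12), [0, 0, 0, 0, 0, 0, 0, 0, 0, 0, 0, 0, 0, 0, 0, 0, 0, 0, 0, 0, -1, 0, 0, 0, 0, 0, 0, 0, 0], 2),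
    ((14, 13), [0, 0, 0, 0, 0, 0, 0, 0, 0, 0, 0, 0, 0, 0, 0, 0, 0, 0, 0, 0, 0, 0, -1, 0, 0, 0, 0, 0, 0], 1),
    ((14, 17), [0, 0, 0, 0, 0, 0, 0, 0, 0, 0, 0, 0, 0, 0, 0, 0, 0, 0, 0, 0, 0, 0, 0, 0, 1, 0, 0, 0, 0], -1),
    ((14, 11), [0, 0, 0, 0, 0, 0, 0, 0, 0, 0, 0, 0, 0, 0, 0, 0, 0, -1, 0, 0, 0, 0, 0, 0, 0, 0, 0, 0, 0], 0),
    ((14, 5), [0, 0, 0, 0, 0, 0, 0, 0, 0, 0, 0, 0, 0, 0, 0, 0, 0, 1, 0, 0, 1, 0, 1, 0, -1, 0, 0, 0, 0], -2),
    ((15, 16), [0, 0, 0, 0, 0, 0, 0, 0, 0, 0, 0, 0, 0, 0, 0, 0, 0, 0, 0, 0, 0, 0, 0, 0, 0, 1, 0, 0, 0], 1),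
    ((15, 17), [0, 0, 0, 0, 0, 0, 0, 0, 0, 0, 0, 0, 0, 0, 0, 0, 0, 0, 0, 0, 0, 0, 0, 0, 0, 0, 1, 0, 0], 0),
    ((15, 9), [0, 0, 0, 0, 0, 0, 0, 0, 0, 0, 0, 0, 0, -1, 0, 0, 0, 0, 0, 0, 0, 0, 0, 0, 0, 0, 0, 0, 0], 0),
    ((15, 12), [0, 0, 0, 0, 0, 0, 0, 0, 0, 0, 0, 0, 0, 0, 0, 0, 0, 0, 0, 0, 0, -1, 0, 0, 0, 0, 0, 0, 0], -1),
    ((15, 6), [0, 0, 0, 0, 0, 0, 0, 0, 0, 0, 0, 0, 0, 1, 0, 0, 0, 0, 0, 0, 0, 1, 0, 0, 0, -1, -1, 0, 0], 0),
    ((16, 17), [0, 0, 0, 0, 0, 0, 0, 0, 0, 0, 0, 0, 0, 0, 0, 0, 0, 0, 0, 0, 0, 0, 0, 0, 0, 0, 0, 1, 0], 1),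
    ((16, 15), [0, 0, 0, 0, 0, 0, 0, 0, 0, 0, 0, 0, 0, 0, 0, 0, 0, 0, 0, 0, 0, 0, 0, 0, 0, -1, 0, 0, 0], -1),
    ((16, 10), [0, 0, 0, 0, 0, 0, 0, 0, 0, 0, 0, 0, 0, 0, 0, 0, -1, 0, 0, 0, 0, 0, 0, 0, 0, 0, 0, 0, 0], -1),
    ((16, 13), [0, 0, 0, 0, 0, 0, 0, 0, 0, 0, 0, 0, 0, 0, 0, 0, 0, 0, 0, 0, 0, 0, 0, -1, 0, 0, 0, 0, 0], 1),
    ((16, 7), [0, 0, 0, 0, 0, 0, 0, 0, 0, 0, 0, 0, 0, 0, 0, 0, 1, 0, 0, 0, 0, 0, 0, 1, 0, 1, 0, -1, 0], 0),
    ((17, 15), [0, 0, 0, 0, 0, 0, 0, 0, 0, 0, 0, 0, 0, 0, 0, 0, 0, 0, 0, 0, 0, 0, 0, 0, 0, 0, -1, 0, 0], 0),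
    ((17, 16), [0, 0, 0, 0, 0, 0, 0, 0, 0, 0, 0, 0, 0, 0, 0, 0, 0, 0, 0, 0, 0, 0, 0, 0, 0, 0, 0, -1, 0], -1),
    ((17, 11), [0, 0, 0, 0, 0, 0, 0, 0, 0, 0, 0, 0, 0, 0, 0, 0, 0, 0, -1, 0, 0, 0, 0, 0, 0, 0, 0, 0, 0], -1),
    ((17, 14), [0, 0, 0, 0, 0, 0, 0, 0, 0, 0, 0, 0, 0, 0, 0, 0, 0, 0, 0, 0, 0, 0, 0, 0, -1, 0, 0, 0, 0], 1),
    ((17, 8), [0, 0, 0, 0, 0, 0, 0, 0, 0, 0, 0, 0, 0, 0, 0, 0, 0, 0, 1, 0, 0, 0, 0, 0, 1, 0, 1, 1, 0], 1)]"

lemma nbrs_0: "nbrs 0 = [1, 2, 3, 6, 9]" by (simp add: nbrs_def enc3_def)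

lemma nbrs_1: "nbrs (Suc 0) = [2, 0, 4, 7, 10]" by (simp add: nbrs_def enc3_def)

lemma nbrs_2: "nbrs 2 = [0, 1, 5, 8, 11]" by (simp add: nbrs_def enc3_def)

lemma nbrs_3: "nbrs 3 = [4, 5, 6, 0, 12]" by (simp add: nbrs_def enc3_def)

lemma nbrs_4: "nbrs 4 = [5, 3, 7, 1, 13]" by (simp add: nbrs_def enc3_def)

lemma nbrs_5: "nbrs 5 = [3, 4, 8, 2, 14]" by (simp add: nbrs_def enc3_def)

lemma nbrs_6: "nbrs 6 = [7, 8, 0, 3, 15]" by (simp add: nbrs_def enc3_def)

lemma nbrs_7: "nbrs 7 = [8, 6, 1, 4, 16]" by (simp add: nbrs_def enc3_def)

lemma nbrs_8: "nbrs 8 = [6, 7, 2, 5, 17]" by (simp add: nbrs_def enc3_def)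

lemma nbrs_9: "nbrs 9 = [10, 11, 12, 15, 0]" by (simp add: nbrs_def enc3_def)

lemma nbrs_10: "nbrs 10 = [11, 9, 13, 16, 1]" by (simp add: nbrs_def enc3_def)

lemma nbrs_11: "nbrs 11 = [9, 10, 14, 17, 2]" by (simp add: nbrs_def enc3_def)

lemma nbrs_12: "nbrs 12 = [13, 14, 15, 9, 3]" by (simp add: nbrs_def enc3_def)

lemma nbrs_13: "nbrs 13 = [14, 12, 16, 10, 4]" by (simp add: nbrs_def enc3_def)

lemma nbrs_14: "nbrs 14 = [12, 13, 17, 11, 5]" by (simp add: nbrs_def enc3_def)

lemma nbrs_15: "nbrs 15 = [16, 17, 9, 12, 6]" by (simp add: nbrs_def enc3_def)

lemma nbrs_16: "nbrs 16 = [17, 15, 10, 13, 7]" by (simp add: nbrs_def enc3_def)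

lemma nbrs_17: "nbrs 17 = [15, 16, 11, 14, 8]" by (simp add: nbrs_def enc3_def)

lemmas nbrsv = nbrs_0 nbrs_1 nbrs_2 nbrs_3 nbrs_4 nbrs_5 nbrs_6 nbrs_7 nbrs_8 nbrs_9 nbrs_10 nbrs_11 nbrs_12 nbrs_13 nbrs_14 nbrs_15 nbrs_16 nbrs_17

lemma adj_tab: "adj i j \<Longrightarrow> (i, j) \<in> set (map fst tab)"
proof -
  have e: "map fst tab = adjpairs" by code_simp
  assume "adj i j"
  then show ?thesis unfolding e by (auto simp: adj_def adjpairs_def)
qed

lemma GT: "list_all (\<lambda>((i, j), fv, b). length fv = 29 \<and> comb (map (\<lambda>cy. ccf cy i j) cycles) Cv = vadd fv (smul b Pv)) tab"
  by code_simp

lemma CvL: "\<forall>v\<in>set Cv. length v = 29" by code_simp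

lemma CvL2: "length Cv = 28" by code_simp

lemma PvL: "length Pv = 29" by code_simp

lemma core:
  fixes F :: "nat \<Rightarrow> nat \<Rightarrow> int"
  assumes anti: "\<And>i j. adj i j \<Longrightarrow> F i j = - F j i"
    and cons: "\<And>i. i < 18 \<Longrightarrow> sum_list (map (F i) (nbrs i)) = 0"
    and par: "even (sum_list (map (\<lambda>(i, j). F i j) edgelist))"
  shows "\<exists>cs. length cs = 28 \<and> (\<forall>i j. adj i j \<longrightarrow> F i j = sum_list (map2 (\<lambda>c cy. c * ccf cy i j) cs cycles))"
proof -
  have A_0_1: "F (Suc 0) 0 = - F 0 (Suc 0)" using anti[of 0 1] by (simp add: adj_def nbrsv)
  have A_0_2: "F 2 0 = - F 0 2" using anti[of 0 2] by (simp add: adj_def nbrsv)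
  have A_0_3: "F 3 0 = - F 0 3" using anti[of 0 3] by (simp add: adj_def nbrsv)
  have A_0_6: "F 6 0 = - F 0 6" using anti[of 0 6] by (simp add: adj_def nbrsv)
  have A_0_9: "F 9 0 = - F 0 9" using anti[of 0 9] by (simp add: adj_def nbrsv)
  have A_1_2: "F 2 (Suc 0) = - F (Suc 0) 2" using anti[of 1 2] by (simp add: adj_def nbrsv)
  have A_1_4: "F 4 (Suc 0) = - F (Suc 0) 4" using anti[of 1 4] by (simp add: adj_def nbrsv)
  have A_1_7: "F 7 (Suc 0) = - F (Suc 0) 7" using anti[of 1 7] by (simp add: adj_def nbrsv)
  have A_1_10: "F 10 (Suc 0) = - F (Suc 0) 10" using anti[of 1 10] by (simp add: adj_def nbrsv)
  have A_2_5: "F 5 2 = - F 2 5" using anti[of 2 5] by (simp add: adj_def nbrsv)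
  have A_2_8: "F 8 2 = - F 2 8" using anti[of 2 8] by (simp add: adj_def nbrsv)
  have A_2_11: "F 11 2 = - F 2 11" using anti[of 2 11] by (simp add: adj_def nbrsv)
  have A_3_4: "F 4 3 = - F 3 4" using anti[of 3 4] by (simp add: adj_def nbrsv)
  have A_3_5: "F 5 3 = - F 3 5" using anti[of 3 5] by (simp add: adj_def nbrsv)
  have A_3_6: "F 6 3 = - F 3 6" using anti[of 3 6] by (simp add: adj_def nbrsv)
  have A_3_12: "F 12 3 = - F 3 12" using anti[of 3 12] by (simp add: adj_def nbrsv)
  have A_4_5: "F 5 4 = - F 4 5" using anti[of 4 5] by (simp add: adj_def nbrsv)
  have A_4_7: "F 7 4 = - F 4 7" using anti[of 4 7] by (simp add: adj_def nbrsv)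
  have A_4_13: "F 13 4 = - F 4 13" using anti[of 4 13] by (simp add: adj_def nbrsv)
  have A_5_8: "F 8 5 = - F 5 8" using anti[of 5 8] by (simp add: adj_def nbrsv)
  have A_5_14: "F 14 5 = - F 5 14" using anti[of 5 14] by (simp add: adj_def nbrsv)
  have A_6_7: "F 7 6 = - F 6 7" using anti[of 6 7] by (simp add: adj_def nbrsv)
  have A_6_8: "F 8 6 = - F 6 8" using anti[of 6 8] by (simp add: adj_def nbrsv)
  have A_6_15: "F 15 6 = - F 6 15" using anti[of 6 15] by (simp add: adj_def nbrsv)
  have A_7_8: "F 8 7 = - F 7 8" using anti[of 7 8] by (simp add: adj_def nbrsv)
  have A_7_16: "F 16 7 = - F 7 16" using anti[of 7 16] by (simp add: adj_def nbrsv)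
  have A_8_17: "F 17 8 = - F 8 17" using anti[of 8 17] by (simp add: adj_def nbrsv)
  have A_9_10: "F 10 9 = - F 9 10" using anti[of 9 10] by (simp add: adj_def nbrsv)
  have A_9_11: "F 11 9 = - F 9 11" using anti[of 9 11] by (simp add: adj_def nbrsv)
  have A_9_12: "F 12 9 = - F 9 12" using anti[of 9 12] by (simp add: adj_def nbrsv)
  have A_9_15: "F 15 9 = - F 9 15" using anti[of 9 15] by (simp add: adj_def nbrsv)
  have A_10_11: "F 11 10 = - F 10 11" using anti[of 10 11] by (simp add: adj_def nbrsv)
  have A_10_13: "F 13 10 = - F 10 13" using anti[of 10 13] by (simp add: adj_def nbrsv)
  have A_10_16: "F 16 10 = - F 10 16" using anti[of 10 16] by (simp add: adj_def nbrsv)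
  have A_11_14: "F 14 11 = - F 11 14" using anti[of 11 14] by (simp add: adj_def nbrsv)
  have A_11_17: "F 17 11 = - F 11 17" using anti[of 11 17] by (simp add: adj_def nbrsv)
  have A_12_13: "F 13 12 = - F 12 13" using anti[of 12 13] by (simp add: adj_def nbrsv)
  have A_12_14: "F 14 12 = - F 12 14" using anti[of 12 14] by (simp add: adj_def nbrsv)
  have A_12_15: "F 15 12 = - F 12 15" using anti[of 12 15] by (simp add: adj_def nbrsv)
  have A_13_14: "F 14 13 = - F 13 14" using anti[of 13 14] by (simp add: adj_def nbrsv)
  have A_13_16: "F 16 13 = - F 13 16" using anti[of 13 16] by (simp add: adj_def nbrsv)
  have A_14_17: "F 17 14 = - F 14 17" using anti[of 14 17] by (simp add: adj_def nbrsv)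
  have A_15_16: "F 16 15 = - F 15 16" using anti[of 15 16] by (simp add: adj_def nbrsv)
  have A_15_17: "F 17 15 = - F 15 17" using anti[of 15 17] by (simp add: adj_def nbrsv)
  have A_16_17: "F 17 16 = - F 16 17" using anti[of 16 17] by (simp add: adj_def nbrsv)
  note A = A_0_1 A_0_2 A_0_3 A_0_6 A_0_9 A_1_2 A_1_4 A_1_7 A_1_10 A_2_5 A_2_8 A_2_11 A_3_4 A_3_5 A_3_6 A_3_12 A_4_5 A_4_7 A_4_13 A_5_8 A_5_14 A_6_7 A_6_8 A_6_15 A_7_8 A_7_16 A_8_17 A_9_10 A_9_11 A_9_12 A_9_15 A_10_11 A_10_13 A_10_16 A_11_14 A_11_17 A_12_13 A_12_14 A_12_15 A_13_14 A_13_16 A_14_17 A_15_16 A_15_17 A_16_17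
  have T_8_17: "F 8 17 = - F 11 17 - F 14 17 - F 15 17 - F 16 17" using cons[of 17] by (simp add: nbrsv A ; linarith?)
  have T_5_14: "F 5 14 = - F 11 14 - F 12 14 - F 13 14 + F 14 17" using cons[of 14] by (simp add: nbrsv A T_8_17; linarith?)
  have T_7_16: "F 7 16 = - F 10 16 - F 13 16 - F 15 16 + F 16 17" using cons[of 16] by (simp add: nbrsv A T_8_17 T_5_14; linarith?)
  have T_4_13: "F 4 13 = - F 10 13 - F 12 13 + F 13 14 + F 13 16" using cons[of 13] by (simp add: nbrsv A T_8_17 T_5_14 T_7_16; linarith?)
  have T_6_15: "F 6 15 = - F 9 15 - F 12 15 + F 15 16 + F 15 17" using cons[of 15] by (simp add: nbrsv A T_8_17 T_5_14 T_7_16 T_4_13; linarith?)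
  have T_3_12: "F 3 12 = - F 9 12 + F 12 13 + F 12 14 + F 12 15" using cons[of 12] by (simp add: nbrsv A T_8_17 T_5_14 T_7_16 T_4_13 T_6_15; linarith?)
  have T_2_11: "F 2 11 = - F 9 11 - F 10 11 + F 11 14 + F 11 17" using cons[of 11] by (simp add: nbrsv A T_8_17 T_5_14 T_7_16 T_4_13 T_6_15 T_3_12; linarith?)
  have T_2_8: "F 2 8 = - F 5 8 - F 6 8 - F 7 8 - F 11 17 - F 14 17 - F 15 17 - F 16 17" using cons[of 8] by (simp add: nbrsv A T_8_17 T_5_14 T_7_16 T_4_13 T_6_15 T_3_12 T_2_11; linarith?)
  have T_2_5: "F 2 5 = - F 3 5 - F 4 5 + F 5 8 - F 11 14 - F 12 14 - F 13 14 + F 14 17" using cons[of 5] by (simp add: nbrsv A T_8_17 T_5_14 T_7_16 T_4_13 T_6_15 T_3_12 T_2_11 T_2_8; linarith?)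
  have T_1_10: "F (Suc 0) 10 = - F 9 10 + F 10 11 + F 10 13 + F 10 16" using cons[of 10] by (simp add: nbrsv A T_8_17 T_5_14 T_7_16 T_4_13 T_6_15 T_3_12 T_2_11 T_2_8 T_2_5; linarith?)
  have T_1_7: "F (Suc 0) 7 = - F 4 7 - F 6 7 + F 7 8 - F 10 16 - F 13 16 - F 15 16 + F 16 17" using cons[of 7] by (simp add: nbrsv A T_8_17 T_5_14 T_7_16 T_4_13 T_6_15 T_3_12 T_2_11 T_2_8 T_2_5 T_1_10; linarith?)
  have T_1_4: "F (Suc 0) 4 = - F 3 4 + F 4 5 + F 4 7 - F 10 13 - F 12 13 + F 13 14 + F 13 16" using cons[of 4] by (simp add: nbrsv A T_8_17 T_5_14 T_7_16 T_4_13 T_6_15 T_3_12 T_2_11 T_2_8 T_2_5 T_1_10 T_1_7; linarith?)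
  have T_0_9: "F 0 9 = F 9 10 + F 9 11 + F 9 12 + F 9 15" using cons[of 9] by (simp add: nbrsv A T_8_17 T_5_14 T_7_16 T_4_13 T_6_15 T_3_12 T_2_11 T_2_8 T_2_5 T_1_10 T_1_7 T_1_4; linarith?)
  have T_0_6: "F 0 6 = - F 3 6 + F 6 7 + F 6 8 - F 9 15 - F 12 15 + F 15 16 + F 15 17" using cons[of 6] by (simp add: nbrsv A T_8_17 T_5_14 T_7_16 T_4_13 T_6_15 T_3_12 T_2_11 T_2_8 T_2_5 T_1_10 T_1_7 T_1_4 T_0_9; linarith?)
  have T_0_3: "F 0 3 = F 3 4 + F 3 5 + F 3 6 - F 9 12 + F 12 13 + F 12 14 + F 12 15" using cons[of 3] by (simp add: nbrsv A T_8_17 T_5_14 T_7_16 T_4_13 T_6_15 T_3_12 T_2_11 T_2_8 T_2_5 T_1_10 T_1_7 T_1_4 T_0_9 T_0_6; linarith?)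
  have T_0_2: "F 0 2 = - F (Suc 0) 2 - F 3 5 - F 4 5 - F 6 8 - F 7 8 - F 9 11 - F 10 11 - F 12 14 - F 13 14 - F 15 17 - F 16 17" using cons[of 2] by (simp add: nbrsv A T_8_17 T_5_14 T_7_16 T_4_13 T_6_15 T_3_12 T_2_11 T_2_8 T_2_5 T_1_10 T_1_7 T_1_4 T_0_9 T_0_6 T_0_3; linarith?)
  have T_0_1: "F 0 (Suc 0) = F (Suc 0) 2 - F 3 4 + F 4 5 - F 6 7 + F 7 8 - F 9 10 + F 10 11 - F 12 13 + F 13 14 - F 15 16 + F 16 17" using cons[of 1] by (simp add: nbrsv A T_8_17 T_5_14 T_7_16 T_4_13 T_6_15 T_3_12 T_2_11 T_2_8 T_2_5 T_1_10 T_1_7 T_1_4 T_0_9 T_0_6 T_0_3 T_0_2; linarith?)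
  note T = T_8_17 T_5_14 T_7_16 T_4_13 T_6_15 T_3_12 T_2_11 T_2_8 T_2_5 T_1_10 T_1_7 T_1_4 T_0_9 T_0_6 T_0_3 T_0_2 T_0_1
  obtain k where k: "sum_list (map (\<lambda>(i, j). F i j) edgelist) = 2 * k" using par by (auto elim: evenE)
  have K: "F (Suc 0) 2 + F 3 6 + F 4 5 + F 4 7 + F 5 8 + F 7 8 + F 10 11 + F 12 15 + F 13 14 + F 13 16 + F 14 17 + F 16 17 = 2 * k" using k by (simp add: edgelist_def T; linarith?)
  define xs where "xs = [F (Suc 0) 2, F 3 4, F 3 5, F 3 6, F 4 5, F 4 7, F 5 8, F 6 7, F 6 8, F 7 8, F 9 10, F 9 11, F 9 12, F 9 15, F 10 11, F 10 13, F 10 16, F 11 14, F 11 17, F 12 13, F 12 14, F 12 15, F 13 14, F 13 16, F 14 17, F 15 16, F 15 17, F 16 17, k]"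
  have KP: "lin Pv xs = 0" using K by (simp add: lin_def xs_def Pv_def; linarith?)
  have Q_0_1: "F 0 (Suc 0) = lin [1, -1, 0, 0, 1, 0, 0, -1, 0, 1, -1, 0, 0, 0, 1, 0, 0, 0, 0, -1, 0, 0, 1, 0, 0, -1, 0, 1, 0] xs" by (simp add: lin_def xs_def A T; linarith?)
  have Q_0_2: "F 0 2 = lin [-1, 0, -1, 0, -1, 0, 0, 0, -1, -1, 0, -1, 0, 0, -1, 0, 0, 0, 0, 0, -1, 0, -1, 0, 0, 0, -1, -1, 0] xs" by (simp add: lin_def xs_def A T; linarith?)
  have Q_0_3: "F 0 3 = lin [0, 1, 1, 1, 0, 0, 0, 0, 0, 0, 0, 0, -1, 0, 0, 0, 0, 0, 0, 1, 1, 1, 0, 0, 0, 0, 0, 0, 0] xs" by (simp add: lin_def xs_def A T; linarith?)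
  have Q_0_6: "F 0 6 = lin [0, 0, 0, -1, 0, 0, 0, 1, 1, 0, 0, 0, 0, -1, 0, 0, 0, 0, 0, 0, 0, -1, 0, 0, 0, 1, 1, 0, 0] xs" by (simp add: lin_def xs_def A T; linarith?)
  have Q_0_9: "F 0 9 = lin [0, 0, 0, 0, 0, 0, 0, 0, 0, 0, 1, 1, 1, 1, 0, 0, 0, 0, 0, 0, 0, 0, 0, 0, 0, 0, 0, 0, 0] xs" by (simp add: lin_def xs_def A T; linarith?)
  have Q_1_2: "F (Suc 0) 2 = lin [1, 0, 0, 0, 0, 0, 0, 0, 0, 0, 0, 0, 0, 0, 0, 0, 0, 0, 0, 0, 0, 0, 0, 0, 0, 0, 0, 0, 0] xs" by (simp add: lin_def xs_def A T; linarith?)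
  have Q_1_0: "F (Suc 0) 0 = lin [-1, 1, 0, 0, -1, 0, 0, 1, 0, -1, 1, 0, 0, 0, -1, 0, 0, 0, 0, 1, 0, 0, -1, 0, 0, 1, 0, -1, 0] xs" by (simp add: lin_def xs_def A T; linarith?)
  have Q_1_4: "F (Suc 0) 4 = lin [0, -1, 0, 0, 1, 1, 0, 0, 0, 0, 0, 0, 0, 0, 0, -1, 0, 0, 0, -1, 0, 0, 1, 1, 0, 0, 0, 0, 0] xs" by (simp add: lin_def xs_def A T; linarith?)
  have Q_1_7: "F (Suc 0) 7 = lin [0, 0, 0, 0, 0, -1, 0, -1, 0, 1, 0, 0, 0, 0, 0, 0, -1, 0, 0, 0, 0, 0, 0, -1, 0, -1, 0, 1, 0] xs" by (simp add: lin_def xs_def A T; linarith?)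
  have Q_1_10: "F (Suc 0) 10 = lin [0, 0, 0, 0, 0, 0, 0, 0, 0, 0, -1, 0, 0, 0, 1, 1, 1, 0, 0, 0, 0, 0, 0, 0, 0, 0, 0, 0, 0] xs" by (simp add: lin_def xs_def A T; linarith?)
  have Q_2_0: "F 2 0 = lin [1, 0, 1, 0, 1, 0, 0, 0, 1, 1, 0, 1, 0, 0, 1, 0, 0, 0, 0, 0, 1, 0, 1, 0, 0, 0, 1, 1, 0] xs" by (simp add: lin_def xs_def A T; linarith?)
  have Q_2_1: "F 2 (Suc 0) = lin [-1, 0, 0, 0, 0, 0, 0, 0, 0, 0, 0, 0, 0, 0, 0, 0, 0, 0, 0, 0, 0, 0, 0, 0, 0, 0, 0, 0, 0] xs" by (simp add: lin_def xs_def A T; linarith?)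
  have Q_2_5: "F 2 5 = lin [0, 0, -1, 0, -1, 0, 1, 0, 0, 0, 0, 0, 0, 0, 0, 0, 0, -1, 0, 0, -1, 0, -1, 0, 1, 0, 0, 0, 0] xs" by (simp add: lin_def xs_def A T; linarith?)
  have Q_2_8: "F 2 8 = lin [0, 0, 0, 0, 0, 0, -1, 0, -1, -1, 0, 0, 0, 0, 0, 0, 0, 0, -1, 0, 0, 0, 0, 0, -1, 0, -1, -1, 0] xs" by (simp add: lin_def xs_def A T; linarith?)
  have Q_2_11: "F 2 11 = lin [0, 0, 0, 0, 0, 0, 0, 0, 0, 0, 0, -1, 0, 0, -1, 0, 0, 1, 1, 0, 0, 0, 0, 0, 0, 0, 0, 0, 0] xs" by (simp add: lin_def xs_def A T; linarith?)
  have Q_3_4: "F 3 4 = lin [0, 1, 0, 0, 0, 0, 0, 0, 0, 0, 0, 0, 0, 0, 0, 0, 0, 0, 0, 0, 0, 0, 0, 0, 0, 0, 0, 0, 0] xs" by (simp add: lin_def xs_def A T; linarith?)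
  have Q_3_5: "F 3 5 = lin [0, 0, 1, 0, 0, 0, 0, 0, 0, 0, 0, 0, 0, 0, 0, 0, 0, 0, 0, 0, 0, 0, 0, 0, 0, 0, 0, 0, 0] xs" by (simp add: lin_def xs_def A T; linarith?)
  have Q_3_6: "F 3 6 = lin [0, 0, 0, 1, 0, 0, 0, 0, 0, 0, 0, 0, 0, 0, 0, 0, 0, 0, 0, 0, 0, 0, 0, 0, 0, 0, 0, 0, 0] xs" by (simp add: lin_def xs_def A T; linarith?)
  have Q_3_0: "F 3 0 = lin [0, -1, -1, -1, 0, 0, 0, 0, 0, 0, 0, 0, 1, 0, 0, 0, 0, 0, 0, -1, -1, -1, 0, 0, 0, 0, 0, 0, 0] xs" by (simp add: lin_def xs_def A T; linarith?)
  have Q_3_12: "F 3 12 = lin [0, 0, 0, 0, 0, 0, 0, 0, 0, 0, 0, 0, -1, 0, 0, 0, 0, 0, 0, 1, 1, 1, 0, 0, 0, 0, 0, 0, 0] xs" by (simp add: lin_def xs_def A T; linarith?)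
  have Q_4_5: "F 4 5 = lin [0, 0, 0, 0, 1, 0, 0, 0, 0, 0, 0, 0, 0, 0, 0, 0, 0, 0, 0, 0, 0, 0, 0, 0, 0, 0, 0, 0, 0] xs" by (simp add: lin_def xs_def A T; linarith?)
  have Q_4_3: "F 4 3 = lin [0, -1, 0, 0, 0, 0, 0, 0, 0, 0, 0, 0, 0, 0, 0, 0, 0, 0, 0, 0, 0, 0, 0, 0, 0, 0, 0, 0, 0] xs" by (simp add: lin_def xs_def A T; linarith?)
  have Q_4_7: "F 4 7 = lin [0, 0, 0, 0, 0, 1, 0, 0, 0, 0, 0, 0, 0, 0, 0, 0, 0, 0, 0, 0, 0, 0, 0, 0, 0, 0, 0, 0, 0] xs" by (simp add: lin_def xs_def A T; linarith?)
  have Q_4_1: "F 4 (Suc 0) = lin [0, 1, 0, 0, -1, -1, 0, 0, 0, 0, 0, 0, 0, 0, 0, 1, 0, 0, 0, 1, 0, 0, -1, -1, 0, 0, 0, 0, 0] xs" by (simp add: lin_def xs_def A T; linarith?)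
  have Q_4_13: "F 4 13 = lin [0, 0, 0, 0, 0, 0, 0, 0, 0, 0, 0, 0, 0, 0, 0, -1, 0, 0, 0, -1, 0, 0, 1, 1, 0, 0, 0, 0, 0] xs" by (simp add: lin_def xs_def A T; linarith?)
  have Q_5_3: "F 5 3 = lin [0, 0, -1, 0, 0, 0, 0, 0, 0, 0, 0, 0, 0, 0, 0, 0, 0, 0, 0, 0, 0, 0, 0, 0, 0, 0, 0, 0, 0] xs" by (simp add: lin_def xs_def A T; linarith?)
  have Q_5_4: "F 5 4 = lin [0, 0, 0, 0, -1, 0, 0, 0, 0, 0, 0, 0, 0, 0, 0, 0, 0, 0, 0, 0, 0, 0, 0, 0, 0, 0, 0, 0, 0] xs" by (simp add: lin_def xs_def A T; linarith?)
  have Q_5_8: "F 5 8 = lin [0, 0, 0, 0, 0, 0, 1, 0, 0, 0, 0, 0, 0, 0, 0, 0, 0, 0, 0, 0, 0, 0, 0, 0, 0, 0, 0, 0, 0] xs" by (simp add: lin_def xs_def A T; linarith?)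
  have Q_5_2: "F 5 2 = lin [0, 0, 1, 0, 1, 0, -1, 0, 0, 0, 0, 0, 0, 0, 0, 0, 0, 1, 0, 0, 1, 0, 1, 0, -1, 0, 0, 0, 0] xs" by (simp add: lin_def xs_def A T; linarith?)
  have Q_5_14: "F 5 14 = lin [0, 0, 0, 0, 0, 0, 0, 0, 0, 0, 0, 0, 0, 0, 0, 0, 0, -1, 0, 0, -1, 0, -1, 0, 1, 0, 0, 0, 0] xs" by (simp add: lin_def xs_def A T; linarith?)
  have Q_6_7: "F 6 7 = lin [0, 0, 0, 0, 0, 0, 0, 1, 0, 0, 0, 0, 0, 0, 0, 0, 0, 0, 0, 0, 0, 0, 0, 0, 0, 0, 0, 0, 0] xs" by (simp add: lin_def xs_def A T; linarith?)
  have Q_6_8: "F 6 8 = lin [0, 0, 0, 0, 0, 0, 0, 0, 1, 0, 0, 0, 0, 0, 0, 0, 0, 0, 0, 0, 0, 0, 0, 0, 0, 0, 0, 0, 0] xs" by (simp add: lin_def xs_def A T; linarith?)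
  have Q_6_0: "F 6 0 = lin [0, 0, 0, 1, 0, 0, 0, -1, -1, 0, 0, 0, 0, 1, 0, 0, 0, 0, 0, 0, 0, 1, 0, 0, 0, -1, -1, 0, 0] xs" by (simp add: lin_def xs_def A T; linarith?)
  have Q_6_3: "F 6 3 = lin [0, 0, 0, -1, 0, 0, 0, 0, 0, 0, 0, 0, 0, 0, 0, 0, 0, 0, 0, 0, 0, 0, 0, 0, 0, 0, 0, 0, 0] xs" by (simp add: lin_def xs_def A T; linarith?)
  have Q_6_15: "F 6 15 = lin [0, 0, 0, 0, 0, 0, 0, 0, 0, 0, 0, 0, 0, -1, 0, 0, 0, 0, 0, 0, 0, -1, 0, 0, 0, 1, 1, 0, 0] xs" by (simp add: lin_def xs_def A T; linarith?)
  have Q_7_8: "F 7 8 = lin [0, 0, 0, 0, 0, 0, 0, 0, 0, 1, 0, 0, 0, 0, 0, 0, 0, 0, 0, 0, 0, 0, 0, 0, 0, 0, 0, 0, 0] xs" by (simp add: lin_def xs_def A T; linarith?)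
  have Q_7_6: "F 7 6 = lin [0, 0, 0, 0, 0, 0, 0, -1, 0, 0, 0, 0, 0, 0, 0, 0, 0, 0, 0, 0, 0, 0, 0, 0, 0, 0, 0, 0, 0] xs" by (simp add: lin_def xs_def A T; linarith?)
  have Q_7_1: "F 7 (Suc 0) = lin [0, 0, 0, 0, 0, 1, 0, 1, 0, -1, 0, 0, 0, 0, 0, 0, 1, 0, 0, 0, 0, 0, 0, 1, 0, 1, 0, -1, 0] xs" by (simp add: lin_def xs_def A T; linarith?)
  have Q_7_4: "F 7 4 = lin [0, 0, 0, 0, 0, -1, 0, 0, 0, 0, 0, 0, 0, 0, 0, 0, 0, 0, 0, 0, 0, 0, 0, 0, 0, 0, 0, 0, 0] xs" by (simp add: lin_def xs_def A T; linarith?)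
  have Q_7_16: "F 7 16 = lin [0, 0, 0, 0, 0, 0, 0, 0, 0, 0, 0, 0, 0, 0, 0, 0, -1, 0, 0, 0, 0, 0, 0, -1, 0, -1, 0, 1, 0] xs" by (simp add: lin_def xs_def A T; linarith?)
  have Q_8_6: "F 8 6 = lin [0, 0, 0, 0, 0, 0, 0, 0, -1, 0, 0, 0, 0, 0, 0, 0, 0, 0, 0, 0, 0, 0, 0, 0, 0, 0, 0, 0, 0] xs" by (simp add: lin_def xs_def A T; linarith?)
  have Q_8_7: "F 8 7 = lin [0, 0, 0, 0, 0, 0, 0, 0, 0, -1, 0, 0, 0, 0, 0, 0, 0, 0, 0, 0, 0, 0, 0, 0, 0, 0, 0, 0, 0] xs" by (simp add: lin_def xs_def A T; linarith?)
  have Q_8_2: "F 8 2 = lin [0, 0, 0, 0, 0, 0, 1, 0, 1, 1, 0, 0, 0, 0, 0, 0, 0, 0, 1, 0, 0, 0, 0, 0, 1, 0, 1, 1, 0] xs" by (simp add: lin_def xs_def A T; linarith?)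
  have Q_8_5: "F 8 5 = lin [0, 0, 0, 0, 0, 0, -1, 0, 0, 0, 0, 0, 0, 0, 0, 0, 0, 0, 0, 0, 0, 0, 0, 0, 0, 0, 0, 0, 0] xs" by (simp add: lin_def xs_def A T; linarith?)
  have Q_8_17: "F 8 17 = lin [0, 0, 0, 0, 0, 0, 0, 0, 0, 0, 0, 0, 0, 0, 0, 0, 0, 0, -1, 0, 0, 0, 0, 0, -1, 0, -1, -1, 0] xs" by (simp add: lin_def xs_def A T; linarith?)
  have Q_9_10: "F 9 10 = lin [0, 0, 0, 0, 0, 0, 0, 0, 0, 0, 1, 0, 0, 0, 0, 0, 0, 0, 0, 0, 0, 0, 0, 0, 0, 0, 0, 0, 0] xs" by (simp add: lin_def xs_def A T; linarith?)
  have Q_9_11: "F 9 11 = lin [0, 0, 0, 0, 0, 0, 0, 0, 0, 0, 0, 1, 0, 0, 0, 0, 0, 0, 0, 0, 0, 0, 0, 0, 0, 0, 0, 0, 0] xs" by (simp add: lin_def xs_def A T; linarith?)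
  have Q_9_12: "F 9 12 = lin [0, 0, 0, 0, 0, 0, 0, 0, 0, 0, 0, 0, 1, 0, 0, 0, 0, 0, 0, 0, 0, 0, 0, 0, 0, 0, 0, 0, 0] xs" by (simp add: lin_def xs_def A T; linarith?)
  have Q_9_15: "F 9 15 = lin [0, 0, 0, 0, 0, 0, 0, 0, 0, 0, 0, 0, 0, 1, 0, 0, 0, 0, 0, 0, 0, 0, 0, 0, 0, 0, 0, 0, 0] xs" by (simp add: lin_def xs_def A T; linarith?)
  have Q_9_0: "F 9 0 = lin [0, 0, 0, 0, 0, 0, 0, 0, 0, 0, -1, -1, -1, -1, 0, 0, 0, 0, 0, 0, 0, 0, 0, 0, 0, 0, 0, 0, 0] xs" by (simp add: lin_def xs_def A T; linarith?)
  have Q_10_11: "F 10 11 = lin [0, 0, 0, 0, 0, 0, 0, 0, 0, 0, 0, 0, 0, 0, 1, 0, 0, 0, 0, 0, 0, 0, 0, 0, 0, 0, 0, 0, 0] xs" by (simp add: lin_def xs_def A T; linarith?)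
  have Q_10_9: "F 10 9 = lin [0, 0, 0, 0, 0, 0, 0, 0, 0, 0, -1, 0, 0, 0, 0, 0, 0, 0, 0, 0, 0, 0, 0, 0, 0, 0, 0, 0, 0] xs" by (simp add: lin_def xs_def A T; linarith?)
  have Q_10_13: "F 10 13 = lin [0, 0, 0, 0, 0, 0, 0, 0, 0, 0, 0, 0, 0, 0, 0, 1, 0, 0, 0, 0, 0, 0, 0, 0, 0, 0, 0, 0, 0] xs" by (simp add: lin_def xs_def A T; linarith?)
  have Q_10_16: "F 10 16 = lin [0, 0, 0, 0, 0, 0, 0, 0, 0, 0, 0, 0, 0, 0, 0, 0, 1, 0, 0, 0, 0, 0, 0, 0, 0, 0, 0, 0, 0] xs" by (simp add: lin_def xs_def A T; linarith?)
  have Q_10_1: "F 10 (Suc 0) = lin [0, 0, 0, 0, 0, 0, 0, 0, 0, 0, 1, 0, 0, 0, -1, -1, -1, 0, 0, 0, 0, 0, 0, 0, 0, 0, 0, 0, 0] xs" by (simp add: lin_def xs_def A T; linarith?)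
  have Q_11_9: "F 11 9 = lin [0, 0, 0, 0, 0, 0, 0, 0, 0, 0, 0, -1, 0, 0, 0, 0, 0, 0, 0, 0, 0, 0, 0, 0, 0, 0, 0, 0, 0] xs" by (simp add: lin_def xs_def A T; linarith?)
  have Q_11_10: "F 11 10 = lin [0, 0, 0, 0, 0, 0, 0, 0, 0, 0, 0, 0, 0, 0, -1, 0, 0, 0, 0, 0, 0, 0, 0, 0, 0, 0, 0, 0, 0] xs" by (simp add: lin_def xs_def A T; linarith?)
  have Q_11_14: "F 11 14 = lin [0, 0, 0, 0, 0, 0, 0, 0, 0, 0, 0, 0, 0, 0, 0, 0, 0, 1, 0, 0, 0, 0, 0, 0, 0, 0, 0, 0, 0] xs" by (simp add: lin_def xs_def A T; linarith?)
  have Q_11_17: "F 11 17 = lin [0, 0, 0, 0, 0, 0, 0, 0, 0, 0, 0, 0, 0, 0, 0, 0, 0, 0, 1, 0, 0, 0, 0, 0, 0, 0, 0, 0, 0] xs" by (simp add: lin_def xs_def A T; linarith?)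
  have Q_11_2: "F 11 2 = lin [0, 0, 0, 0, 0, 0, 0, 0, 0, 0, 0, 1, 0, 0, 1, 0, 0, -1, -1, 0, 0, 0, 0, 0, 0, 0, 0, 0, 0] xs" by (simp add: lin_def xs_def A T; linarith?)
  have Q_12_13: "F 12 13 = lin [0, 0, 0, 0, 0, 0, 0, 0, 0, 0, 0, 0, 0, 0, 0, 0, 0, 0, 0, 1, 0, 0, 0, 0, 0, 0, 0, 0, 0] xs" by (simp add: lin_def xs_def A T; linarith?)
  have Q_12_14: "F 12 14 = lin [0, 0, 0, 0, 0, 0, 0, 0, 0, 0, 0, 0, 0, 0, 0, 0, 0, 0, 0, 0, 1, 0, 0, 0, 0, 0, 0, 0, 0] xs" by (simp add: lin_def xs_def A T; linarith?)
  have Q_12_15: "F 12 15 = lin [0, 0, 0, 0, 0, 0, 0, 0, 0, 0, 0, 0, 0, 0, 0, 0, 0, 0, 0, 0, 0, 1, 0, 0, 0, 0, 0, 0, 0] xs" by (simp add: lin_def xs_def A T; linarith?)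
  have Q_12_9: "F 12 9 = lin [0, 0, 0, 0, 0, 0, 0, 0, 0, 0, 0, 0, -1, 0, 0, 0, 0, 0, 0, 0, 0, 0, 0, 0, 0, 0, 0, 0, 0] xs" by (simp add: lin_def xs_def A T; linarith?)
  have Q_12_3: "F 12 3 = lin [0, 0, 0, 0, 0, 0, 0, 0, 0, 0, 0, 0, 1, 0, 0, 0, 0, 0, 0, -1, -1, -1, 0, 0, 0, 0, 0, 0, 0] xs" by (simp add: lin_def xs_def A T; linarith?)
  have Q_13_14: "F 13 14 = lin [0, 0, 0, 0, 0, 0, 0, 0, 0, 0, 0, 0, 0, 0, 0, 0, 0, 0, 0, 0, 0, 0, 1, 0, 0, 0, 0, 0, 0] xs" by (simp add: lin_def xs_def A T; linarith?)
  have Q_13_12: "F 13 12 = lin [0, 0, 0, 0, 0, 0, 0, 0, 0, 0, 0, 0, 0, 0, 0, 0, 0, 0, 0, -1, 0, 0, 0, 0, 0, 0, 0, 0, 0] xs" by (simp add: lin_def xs_def A T; linarith?)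
  have Q_13_16: "F 13 16 = lin [0, 0, 0, 0, 0, 0, 0, 0, 0, 0, 0, 0, 0, 0, 0, 0, 0, 0, 0, 0, 0, 0, 0, 1, 0, 0, 0, 0, 0] xs" by (simp add: lin_def xs_def A T; linarith?)
  have Q_13_10: "F 13 10 = lin [0, 0, 0, 0, 0, 0, 0, 0, 0, 0, 0, 0, 0, 0, 0, -1, 0, 0, 0, 0, 0, 0, 0, 0, 0, 0, 0, 0, 0] xs" by (simp add: lin_def xs_def A T; linarith?)
  have Q_13_4: "F 13 4 = lin [0, 0, 0, 0, 0, 0, 0, 0, 0, 0, 0, 0, 0, 0, 0, 1, 0, 0, 0, 1, 0, 0, -1, -1, 0, 0, 0, 0, 0] xs" by (simp add: lin_def xs_def A T; linarith?)
  have Q_14_12: "F 14 12 = lin [0, 0, 0, 0, 0, 0, 0, 0, 0, 0, 0, 0, 0, 0, 0, 0, 0, 0, 0, 0, -1, 0, 0, 0, 0, 0, 0, 0, 0] xs" by (simp add: lin_def xs_def A T; linarith?)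
  have Q_14_13: "F 14 13 = lin [0, 0, 0, 0, 0, 0, 0, 0, 0, 0, 0, 0, 0, 0, 0, 0, 0, 0, 0, 0, 0, 0, -1, 0, 0, 0, 0, 0, 0] xs" by (simp add: lin_def xs_def A T; linarith?)
  have Q_14_17: "F 14 17 = lin [0, 0, 0, 0, 0, 0, 0, 0, 0, 0, 0, 0, 0, 0, 0, 0, 0, 0, 0, 0, 0, 0, 0, 0, 1, 0, 0, 0, 0] xs" by (simp add: lin_def xs_def A T; linarith?)
  have Q_14_11: "F 14 11 = lin [0, 0, 0, 0, 0, 0, 0, 0, 0, 0, 0, 0, 0, 0, 0, 0, 0, -1, 0, 0, 0, 0, 0, 0, 0, 0, 0, 0, 0] xs" by (simp add: lin_def xs_def A T; linarith?)
  have Q_14_5: "F 14 5 = lin [0, 0, 0, 0, 0, 0, 0, 0, 0, 0, 0, 0, 0, 0, 0, 0, 0, 1, 0, 0, 1, 0, 1, 0, -1, 0, 0, 0, 0] xs" by (simp add: lin_def xs_def A T; linarith?)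
  have Q_15_16: "F 15 16 = lin [0, 0, 0, 0, 0, 0, 0, 0, 0, 0, 0, 0, 0, 0, 0, 0, 0, 0, 0, 0, 0, 0, 0, 0, 0, 1, 0, 0, 0] xs" by (simp add: lin_def xs_def A T; linarith?)
  have Q_15_17: "F 15 17 = lin [0, 0, 0, 0, 0, 0, 0, 0, 0, 0, 0, 0, 0, 0, 0, 0, 0, 0, 0, 0, 0, 0, 0, 0, 0, 0, 1, 0, 0] xs" by (simp add: lin_def xs_def A T; linarith?)
  have Q_15_9: "F 15 9 = lin [0, 0, 0, 0, 0, 0, 0, 0, 0, 0, 0, 0, 0, -1, 0, 0, 0, 0, 0, 0, 0, 0, 0, 0, 0, 0, 0, 0, 0] xs" by (simp add: lin_def xs_def A T; linarith?)
  have Q_15_12: "F 15 12 = lin [0, 0, 0, 0, 0, 0, 0, 0, 0, 0, 0, 0, 0, 0, 0, 0, 0, 0, 0, 0, 0, -1, 0, 0, 0, 0, 0, 0, 0] xs" by (simp add: lin_def xs_def A T; linarith?)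
  have Q_15_6: "F 15 6 = lin [0, 0, 0, 0, 0, 0, 0, 0, 0, 0, 0, 0, 0, 1, 0, 0, 0, 0, 0, 0, 0, 1, 0, 0, 0, -1, -1, 0, 0] xs" by (simp add: lin_def xs_def A T; linarith?)
  have Q_16_17: "F 16 17 = lin [0, 0, 0, 0, 0, 0, 0, 0, 0, 0, 0, 0, 0, 0, 0, 0, 0, 0, 0, 0, 0, 0, 0, 0, 0, 0, 0, 1, 0] xs" by (simp add: lin_def xs_def A T; linarith?)
  have Q_16_15: "F 16 15 = lin [0, 0, 0, 0, 0, 0, 0, 0, 0, 0, 0, 0, 0, 0, 0, 0, 0, 0, 0, 0, 0, 0, 0, 0, 0, -1, 0, 0, 0] xs" by (simp add: lin_def xs_def A T; linarith?)
  have Q_16_10: "F 16 10 = lin [0, 0, 0, 0, 0, 0, 0, 0, 0, 0, 0, 0, 0, 0, 0, 0, -1, 0, 0, 0, 0, 0, 0, 0, 0, 0, 0, 0, 0] xs" by (simp add: lin_def xs_def A T; linarith?)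
  have Q_16_13: "F 16 13 = lin [0, 0, 0, 0, 0, 0, 0, 0, 0, 0, 0, 0, 0, 0, 0, 0, 0, 0, 0, 0, 0, 0, 0, -1, 0, 0, 0, 0, 0] xs" by (simp add: lin_def xs_def A T; linarith?)
  have Q_16_7: "F 16 7 = lin [0, 0, 0, 0, 0, 0, 0, 0, 0, 0, 0, 0, 0, 0, 0, 0, 1, 0, 0, 0, 0, 0, 0, 1, 0, 1, 0, -1, 0] xs" by (simp add: lin_def xs_def A T; linarith?)
  have Q_17_15: "F 17 15 = lin [0, 0, 0, 0, 0, 0, 0, 0, 0, 0, 0, 0, 0, 0, 0, 0, 0, 0, 0, 0, 0, 0, 0, 0, 0, 0, -1, 0, 0] xs" by (simp add: lin_def xs_def A T; linarith?)
  have Q_17_16: "F 17 16 = lin [0, 0, 0, 0, 0, 0, 0, 0, 0, 0, 0, 0, 0, 0, 0, 0, 0, 0, 0, 0, 0, 0, 0, 0, 0, 0, 0, -1, 0] xs" by (simp add: lin_def xs_def A T; linarith?)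
  have Q_17_11: "F 17 11 = lin [0, 0, 0, 0, 0, 0, 0, 0, 0, 0, 0, 0, 0, 0, 0, 0, 0, 0, -1, 0, 0, 0, 0, 0, 0, 0, 0, 0, 0] xs" by (simp add: lin_def xs_def A T; linarith?)
  have Q_17_14: "F 17 14 = lin [0, 0, 0, 0, 0, 0, 0, 0, 0, 0, 0, 0, 0, 0, 0, 0, 0, 0, 0, 0, 0, 0, 0, 0, -1, 0, 0, 0, 0] xs" by (simp add: lin_def xs_def A T; linarith?)
  have Q_17_8: "F 17 8 = lin [0, 0, 0, 0, 0, 0, 0, 0, 0, 0, 0, 0, 0, 0, 0, 0, 0, 0, 1, 0, 0, 0, 0, 0, 1, 0, 1, 1, 0] xs" by (simp add: lin_def xs_def A T; linarith?)
  have QT: "list_all (\<lambda>((i, j), fv, b). F i j = lin fv xs) tab"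
    unfolding tab_def by (simp add: Q_0_1 Q_0_2 Q_0_3 Q_0_6 Q_0_9 Q_1_2 Q_1_0 Q_1_4 Q_1_7 Q_1_10 Q_2_0 Q_2_1 Q_2_5 Q_2_8 Q_2_11 Q_3_4 Q_3_5 Q_3_6 Q_3_0 Q_3_12 Q_4_5 Q_4_3 Q_4_7 Q_4_1 Q_4_13 Q_5_3 Q_5_4 Q_5_8 Q_5_2 Q_5_14 Q_6_7 Q_6_8 Q_6_0 Q_6_3 Q_6_15 Q_7_8 Q_7_6 Q_7_1 Q_7_4 Q_7_16 Q_8_6 Q_8_7 Q_8_2 Q_8_5 Q_8_17 Q_9_10 Q_9_11 Q_9_12 Q_9_15 Q_9_0 Q_10_11 Q_10_9 Q_10_13 Q_10_16 Q_10_1 Q_11_9 Q_11_10 Q_11_14 Q_11_17 Q_11_2 Q_12_13 Q_12_14 Q_12_15 Q_12_9 Q_12_3 Q_13_14 Q_13_12 Q_13_16 Q_13_10 Q_13_4 Q_14_12 Q_14_13 Q_14_17 Q_14_11 Q_14_5 Q_15_16 Q_15_17 Q_15_9 Q_15_12 Q_15_6 Q_16_17 Q_16_15 Q_16_10 Q_16_13 Q_16_7 Q_17_15 Q_17_16 Q_17_11 Q_17_14 Q_17_8)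
  show ?thesis
  proof (intro exI conjI allI impI)
    show "length (map (\<lambda>v. lin v xs) Cv) = 28" by (simp add: CvL2)
    fix i j assume "adj i j"
    then obtain fv b where m: "((i, j), fv, b) \<in> set tab" using adj_tab by fastforce
    have q: "F i j = lin fv xs" using QT m by (auto simp: list_all_iff)
    have g: "length fv = 29" "comb (map (\<lambda>cy. ccf cy i j) cycles) Cv = vadd fv (smul b Pv)"
      using GT m by (auto simp: list_all_iff)
    have "sum_list (map2 (\<lambda>c cy. c * ccf cy i j) (map (\<lambda>v. lin v xs) Cv) cycles)
        = sum_list (map2 (\<lambda>a v. a * lin v xs) (map (\<lambda>cy. ccf cy i j) cycles) Cv)"
      by (rule swap)
    also have "\<dots> = lin (comb (map (\<lambda>cy. ccf cy i j) cycles) Cv) xs"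
      by (rule comb_lin[OF CvL])
    also have "\<dots> = lin fv xs + lin (smul b Pv) xs"
      unfolding g(2) by (rule lin_vadd) (simp add: g(1) smul_def PvL)
    also have "\<dots> = F i j" by (simp add: lin_smul KP q)
    finally show "F i j = sum_list (map2 (\<lambda>c cy. c * ccf cy i j) (map (\<lambda>v. lin v xs) Cv) cycles)" by simp
  qed
qed


lemma int_span_smul_nat: "f \<in> int_span C \<Longrightarrow> (\<lambda>v s. int n * f v s) \<in> int_span C"
proof (induction n)
  case 0
  then show ?case using int_span.zero by simp
next
  case (Suc n)
  have "(\<lambda>v s. int n * f v s + f v s) \<in> int_span C"
    using int_span.add[OF Suc.IH[OF Suc.prems] Suc.prems] .
  then show ?case by (simp add: algebra_simps)
qed

lemma int_span_smul:
  assumes f: "f \<in> int_span C" shows "(\<lambda>v s. (c::int) * f v s) \<in> int_span C"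
proof (cases "c \<ge> 0")
  case True
  then obtain n where "c = int n" by (intro that[of "nat c"]) simp
  then show ?thesis using int_span_smul_nat[OF f, of n] by simp
next
  case False
  then obtain n where n: "c = - int n" by (intro that[of "nat (- c)"]) simp
  have "(\<lambda>v s. - (int n * f v s)) \<in> int_span C"
    using int_span.neg[OF int_span_smul_nat[OF f]] by blast
  then show ?thesis using n by simp
qed

lemma int_span_lc:
  "set gs \<subseteq> C \<Longrightarrow> (\<lambda>v s. sum_list (map2 (\<lambda>c g. c * g v s) cs gs)) \<in> int_span C"
proof (induction gs arbitrary: cs)
  case Nil
  then show ?case using int_span.zero by simp
next
  case (Cons g gs)
  show ?case
  proof (cases cs)
    case Nil
    then show ?thesis using int_span.zero by simp
  next
    case (Cons c cs')
    have gC: "g \<in> C" using Cons.prems by simp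
    have a: "(\<lambda>v s. c * g v s) \<in> int_span C"
      using int_span_smul[OF int_span.gen[OF gC]] .
    have b: "(\<lambda>v s. sum_list (map2 (\<lambda>c g. c * g v s) cs' gs)) \<in> int_span C"
      using Cons.IH[of cs'] Cons.prems by simp
    show ?thesis using int_span.add[OF a b] Cons by simp
  qed
qed

definition fw :: "'b list \<Rightarrow> 'b \<Rightarrow> 'b \<Rightarrow> bool" where
  "fw vs v w \<longleftrightarrow> (v, w) \<in> set (zip vs (rotate1 vs))"

lemma fw_nth: "fw vs v w \<longleftrightarrow> (\<exists>i<length vs. v = vs ! i \<and> w = vs ! (Suc i mod length vs))"
  unfolding fw_def in_set_zip by (auto simp: nth_rotate1)

lemma suc_mod: "i < n \<Longrightarrow> Suc i mod n = (if Suc i = n then 0 else Suc i)"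
  by (simp add: mod_Suc)

lemma succ_inj: "i < n \<Longrightarrow> j < n \<Longrightarrow> Suc i mod n = Suc j mod n \<Longrightarrow> i = j"
  by (auto simp: suc_mod split: if_splits)

lemma cf_eq:
  fixes vs :: "'a::ab_group_add list"
  shows "cycle_flow vs v s = (if fw vs v (v + s) then 1 else if fw vs (v + s) v then -1 else 0)"
proof -
  have e1: "(s = a - v) \<longleftrightarrow> (v + s = a)" for a by (auto simp: algebra_simps)
  have c1: "(\<exists>i<length vs. v = vs ! i \<and> s = vs ! ((i + 1) mod length vs) - v) \<longleftrightarrow> fw vs v (v + s)"
    unfolding fw_nth e1 by simp
  have c2: "(\<exists>i<length vs. v = vs ! ((i + 1) mod length vs) \<and> s = vs ! i - v) \<longleftrightarrow> fw vs (v + s) v"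
    unfolding fw_nth e1 by auto
  have "cycle_flow vs v s = (if (\<exists>i<length vs. v = vs ! i \<and> s = vs ! ((i + 1) mod length vs) - v) then 1
     else if (\<exists>i<length vs. v = vs ! ((i + 1) mod length vs) \<and> s = vs ! i - v) then -1 else 0)"
    unfolding cycle_flow_def by simp
  then show ?thesis unfolding c1 c2 .
qed

lemma not_both:
  assumes d: "distinct vs" and n: "3 \<le> length vs" and f1: "fw vs v w" and f2: "fw vs w v"
  shows False
proof -
  let ?n = "length vs"
  obtain i where i: "i < ?n" "v = vs ! i" "w = vs ! (Suc i mod ?n)" using f1 by (auto simp: fw_nth)
  obtain j where j: "j < ?n" "w = vs ! j" "v = vs ! (Suc j mod ?n)" using f2 by (auto simp: fw_nth)
  have n0: "0 < ?n" using n by linarith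
  have si: "Suc i mod ?n < ?n" "Suc j mod ?n < ?n" using n0 by simp_all
  have "j = Suc i mod ?n" using i j d si nth_eq_iff_index_eq by metis
  moreover have "i = Suc j mod ?n" using i j d si nth_eq_iff_index_eq by metis
  ultimately show False using i(1) j(1) n by (auto simp: suc_mod split: if_splits)
qed

lemma fw_fun: "distinct vs \<Longrightarrow> fw vs v w \<Longrightarrow> fw vs v w' \<Longrightarrow> w = w'"
  unfolding fw_nth using nth_eq_iff_index_eq by metis

lemma fw_inj: "distinct vs \<Longrightarrow> fw vs v w \<Longrightarrow> fw vs v' w \<Longrightarrow> v = v'"
proof -
  assume d: "distinct vs" and a: "fw vs v w" "fw vs v' w"
  obtain i where i: "i < length vs" "v = vs ! i" "w = vs ! (Suc i mod length vs)" using a by (auto simp: fw_nth)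
  obtain j where j: "j < length vs" "v' = vs ! j" "w = vs ! (Suc j mod length vs)" using a by (auto simp: fw_nth)
  have "Suc i mod length vs = Suc j mod length vs"
    using i j d nth_eq_iff_index_eq by (metis mod_less_divisor zero_less_iff_neq_zero not_less0)
  then have "i = j" using succ_inj i j by blast
  then show ?thesis using i j by simp
qed

lemma fw_ex1: "v \<in> set vs \<Longrightarrow> \<exists>w. fw vs v w"
  unfolding fw_nth by (metis in_set_conv_nth)

lemma fw_ex2: "v \<in> set vs \<Longrightarrow> \<exists>u. fw vs u v"
proof -
  assume "v \<in> set vs"
  then obtain i where i: "i < length vs" "v = vs ! i" by (metis in_set_conv_nth)
  show ?thesis
  proof (cases i)
    case 0
    have "Suc (length vs - 1) = length vs" using i by simp
    then have "Suc (length vs - 1) mod length vs = 0" by simp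
    then have "fw vs (vs ! (length vs - 1)) v" unfolding fw_nth using i 0
      by (metis diff_less zero_less_one gr_implies_not0 not_gr0)
    then show ?thesis by blast
  next
    case (Suc k)
    have "Suc k mod length vs = i" using i Suc by simp
    then have "fw vs (vs ! k) v" unfolding fw_nth using i Suc
      by (metis Suc_lessD)
    then show ?thesis by blast
  qed
qed

lemma fw_S: "ham_cycle S vs \<Longrightarrow> fw vs v w \<Longrightarrow> w - v \<in> S"
  unfolding ham_cycle_def fw_nth by auto

lemma sum_ind: "finite A \<Longrightarrow> (\<Sum>x\<in>A. if P x then (1::int) else 0) = int (card {x\<in>A. P x})"
  by (simp add: sum.inter_filter[symmetric])

lemma ham_flow:
  fixes S :: "'a::{ab_group_add,finite} set"
  assumes h: "ham_cycle S vs" and sym: "\<forall>s\<in>S. - s \<in> S"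
  shows "is_flow S (cycle_flow vs)"
proof -
  have d: "distinct vs" and n: "3 \<le> length vs" and U: "set vs = UNIV" using h by (auto simp: ham_cycle_def)
  have p1: "cycle_flow vs v s = 0" if "s \<notin> S" for v s
  proof -
    have "\<not> fw vs v (v + s)" using fw_S[OF h, of v "v + s"] that by auto
    moreover have "\<not> fw vs (v + s) v"
    proof
      assume "fw vs (v + s) v"
      then have "- s \<in> S" using fw_S[OF h, of "v + s" v] by (simp add: algebra_simps)
      then have "s \<in> S" using sym by force
      then show False using that by simp
    qed
    ultimately show ?thesis by (simp add: cf_eq)
  qed
  have p2: "cycle_flow vs v s = - cycle_flow vs (v + s) (- s)" for v s
  proof -
    have nb: "\<not> (fw vs v (v + s) \<and> fw vs (v + s) v)" using not_both[OF d n] by blast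
    have e: "v + s + - s = v" by simp
    show ?thesis unfolding cf_eq[of vs v s] cf_eq[of vs "v + s" "- s"] e using nb by simp
  qed
  have p3: "(\<Sum>s\<in>S. cycle_flow vs v s) = 0" for v
  proof -
    have vin: "v \<in> set vs" using U by simp
    obtain w where w: "fw vs v w" using fw_ex1[OF vin] by blast
    obtain u where u: "fw vs u v" using fw_ex2[OF vin] by blast
    have A: "{s\<in>S. fw vs v (v + s)} = {w - v}"
    proof -
      have "fw vs v (v + s) \<longleftrightarrow> s = w - v" for s
        using fw_fun[OF d w, of "v + s"] w by (auto simp: algebra_simps)
      then show ?thesis using fw_S[OF h w] by auto
    qed
    have B: "{s\<in>S. fw vs (v + s) v} = {u - v}"
    proof -
      have "fw vs (v + s) v \<longleftrightarrow> s = u - v" for s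
        using fw_inj[OF d u, of "v + s"] u by (auto simp: algebra_simps)
      moreover have "u - v \<in> S"
      proof -
        have "v - u \<in> S" using fw_S[OF h u] .
        then have "- (v - u) \<in> S" using sym by blast
        then show ?thesis by simp
      qed
      ultimately show ?thesis by auto
    qed
    have "(\<Sum>s\<in>S. cycle_flow vs v s)
        = (\<Sum>s\<in>S. (if fw vs v (v + s) then 1 else 0) - (if fw vs (v + s) v then 1 else 0))"
    proof (rule sum.cong)
      fix s
      have nb: "\<not> (fw vs v (v + s) \<and> fw vs (v + s) v)" using not_both[OF d n] by blast
      show "cycle_flow vs v s = (if fw vs v (v + s) then 1 else 0) - (if fw vs (v + s) v then 1 else 0)"
        unfolding cf_eq[of vs v s] using nb by simp
    qed simp
    also have "\<dots> = (\<Sum>s\<in>S. (if fw vs v (v + s) then 1 else 0)) - (\<Sum>s\<in>S. (if fw vs (v + s) v then 1 else 0))"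
      by (simp add: sum_subtractf)
    also have "\<dots> = int (card {s\<in>S. fw vs v (v + s)}) - int (card {s\<in>S. fw vs (v + s) v})"
      by (simp only: sum_ind[OF finite])
    also have "\<dots> = 0" unfolding A B by simp
    finally show ?thesis .
  qed
  show ?thesis unfolding is_flow_def using p1 p2 p3 by blast
qed

lemma edge_flow_ex:
  assumes "e \<in> cayley_edges S"
  shows "\<exists>p1 p2. e = {p1, p2} \<and> p2 - p1 \<in> S \<and> (\<forall>f. edge_flow S f e = f p1 (p2 - p1))"
proof -
  let ?P = "\<lambda>p. e = {fst p, snd p} \<and> snd p - fst p \<in> S"
  obtain g s where "e = {g, g + s}" "s \<in> S" using assms by (auto simp: cayley_edges_def)
  then have "?P (g, g + s)" by simp
  then have "?P (SOME p. ?P p)" by (rule someI)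
  then show ?thesis unfolding edge_flow_def Let_def by blast
qed

lemma ham_even:
  fixes S :: "'a::{ab_group_add,finite} set"
  assumes h: "ham_cycle S vs" and ev: "even (length vs)"
  shows "even (\<Sum>e\<in>cayley_edges S. edge_flow S (cycle_flow vs) e)"
proof -
  let ?n = "length vs"
  have d: "distinct vs" and n: "3 \<le> length vs" using h by (auto simp: ham_cycle_def)
  define Ec where "Ec = (\<lambda>i. {vs ! i, vs ! (Suc i mod ?n)}) ` {..<?n}"
  have fwE: "{p1, p2} \<in> Ec \<longleftrightarrow> fw vs p1 p2 \<or> fw vs p2 p1" for p1 p2
    unfolding Ec_def fw_nth by (auto simp: doubleton_eq_iff)
  have c1: "odd (edge_flow S (cycle_flow vs) e) \<longleftrightarrow> e \<in> Ec" if e: "e \<in> cayley_edges S" for e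
  proof -
    obtain p1 p2 where p: "e = {p1, p2}" "p2 - p1 \<in> S" "\<forall>f. edge_flow S f e = f p1 (p2 - p1)"
      using edge_flow_ex[OF e] by blast
    have "edge_flow S (cycle_flow vs) e = (if fw vs p1 p2 then 1 else if fw vs p2 p1 then -1 else 0)"
      using p(3) by (simp add: cf_eq)
    then show ?thesis using fwE p(1) by auto
  qed
  have c2: "Ec \<subseteq> cayley_edges S"
  proof
    fix e assume "e \<in> Ec"
    then obtain i where i: "i < ?n" "e = {vs ! i, vs ! (Suc i mod ?n)}" unfolding Ec_def by blast
    have "vs ! (Suc i mod ?n) - vs ! i \<in> S" using h i(1) unfolding ham_cycle_def by auto
    moreover have "e = {vs ! i, vs ! i + (vs ! (Suc i mod ?n) - vs ! i)}" using i by simp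
    ultimately show "e \<in> cayley_edges S" unfolding cayley_edges_def by blast
  qed
  have c3: "card Ec = ?n"
  proof -
    have "inj_on (\<lambda>i. {vs ! i, vs ! (Suc i mod ?n)}) {..<?n}"
    proof (rule inj_onI)
      fix i j assume ij: "i \<in> {..<?n}" "j \<in> {..<?n}" and eq: "{vs ! i, vs ! (Suc i mod ?n)} = {vs ! j, vs ! (Suc j mod ?n)}"
      have fi: "fw vs (vs ! i) (vs ! (Suc i mod ?n))" using ij unfolding fw_nth by auto
      have fj: "fw vs (vs ! j) (vs ! (Suc j mod ?n))" using ij unfolding fw_nth by auto
      show "i = j"
      proof (cases "vs ! i = vs ! j")
        case True then show ?thesis using ij d by (simp add: nth_eq_iff_index_eq)
      next
        case False
        then have "vs ! i = vs ! (Suc j mod ?n)" "vs ! (Suc i mod ?n) = vs ! j" using eq False by (auto simp: doubleton_eq_iff)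
        then show ?thesis using not_both[OF d n fi] fj by simp
      qed
    qed
    then show ?thesis unfolding Ec_def by (simp add: card_image)
  qed
  have se: "{e\<in>cayley_edges S. odd (edge_flow S (cycle_flow vs) e)} = Ec"
  proof
    show "{e\<in>cayley_edges S. odd (edge_flow S (cycle_flow vs) e)} \<subseteq> Ec" using c1 by blast
    show "Ec \<subseteq> {e\<in>cayley_edges S. odd (edge_flow S (cycle_flow vs) e)}" using c1 c2 by blast
  qed
  have fin: "finite (cayley_edges S)" by simp
  have "even (\<Sum>e\<in>cayley_edges S. edge_flow S (cycle_flow vs) e)
     = even (card {e\<in>cayley_edges S. odd (edge_flow S (cycle_flow vs) e)})"
    by (rule even_sum_iff[OF fin])
  also have "\<dots> = even (card Ec)" unfolding se ..
  finally show ?thesis using ev c3 by simp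
qed



lemma nbrs_lt: "i < 18 \<Longrightarrow> j \<in> set (nbrs i) \<Longrightarrow> j < 18"
proof -
  have g: "list_all (\<lambda>i. list_all (\<lambda>j. j < 18) (nbrs i)) [0..<18]" by code_simp
  assume "i < 18" "j \<in> set (nbrs i)"
  then show "j < 18" using g by (auto simp: list_all_iff)
qed

lemma nbrs_dist: "i < 18 \<Longrightarrow> distinct (nbrs i)"
proof -
  have g: "list_all (\<lambda>i. distinct (nbrs i)) [0..<18]" by code_simp
  assume "i < 18"
  then show ?thesis using g by (auto simp: list_all_iff)
qed

lemma adj_lt: "adj i j \<Longrightarrow> i < 18 \<and> j < 18"
  using nbrs_lt by (auto simp: adj_def)

lemma EL1: "(i, j) \<in> set edgelist \<Longrightarrow> i < j \<and> adj i j"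
proof -
  have g: "list_all (\<lambda>(i, j). i < j \<and> adj i j) edgelist" by code_simp
  assume "(i, j) \<in> set edgelist"
  then show ?thesis using g by (auto simp: list_all_iff)
qed

lemma EL2: "adj i j \<Longrightarrow> i < j \<Longrightarrow> (i, j) \<in> set edgelist"
proof -
  have g: "list_all (\<lambda>(i, j). i < j \<longrightarrow> (i, j) \<in> set edgelist) adjpairs" by code_simp
  assume "adj i j" "i < j"
  moreover have "(i, j) \<in> set adjpairs" using \<open>adj i j\<close> by (auto simp: adj_def adjpairs_def)
  ultimately show ?thesis using g by (auto simp: list_all_iff)
qed

lemma EL3: "distinct edgelist" by code_simp

lemma CY: "cy \<in> set cycles \<Longrightarrow> distinct cy \<and> set cy = {..<18} \<and> length cy = 18 \<and>
   (\<forall>t<18. adj (cy ! t) (cy ! (Suc t mod 18)))"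
proof -
  have g: "list_all (\<lambda>cy. distinct cy \<and> set cy = set [0..<18] \<and> length cy = 18 \<and> list_all2 adj cy (rotate1 cy)) cycles"
    by code_simp
  assume "cy \<in> set cycles"
  then have a: "distinct cy" "set cy = set [0..<18]" "length cy = 18" "list_all2 adj cy (rotate1 cy)"
    using g by (auto simp: list_all_iff)
  have "\<forall>t<18. adj (cy ! t) (cy ! (Suc t mod 18))"
  proof (intro allI impI)
    fix t :: nat assume "t < 18"
    then have "adj (cy ! t) (rotate1 cy ! t)" using a(3,4) by (simp add: list_all2_conv_all_nth)
    then show "adj (cy ! t) (cy ! (Suc t mod 18))" using a(3) \<open>t < 18\<close> by (simp add: nth_rotate1)
  qed
  moreover have "set cy = {..<18}" using a(2) by (simp add: atLeast0LessThan)
  ultimately show ?thesis using a by simp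
qed

lemma even_sum_list_cong:
  "(\<forall>x\<in>set l. even (g x - h x :: int)) \<Longrightarrow> even (sum_list (map g l)) = even (sum_list (map h l))"
proof (induction l)
  case Nil then show ?case by simp
next
  case (Cons a l)
  have "even (g a - h a)" using Cons.prems by simp
  moreover have "even (sum_list (map g l)) = even (sum_list (map h l))" using Cons by simp
  ultimately show ?case by simp
qed

lemma sl0: "(\<forall>y\<in>set xs. f y = 0) \<Longrightarrow> sum_list (map f xs) = (0::int)"
  by (induction xs) auto

lemma map2_map_right: "map2 f xs (map g ys) = map2 (\<lambda>x y. f x (g y)) xs ys"
proof (induction xs arbitrary: ys)
  case Nil then show ?case by simp
next
  case (Cons x xs) then show ?case by (cases ys) auto
qed

lemma map2_cong_right: "(\<forall>y\<in>set ys. k y = k' y) \<Longrightarrow> map2 (\<lambda>c y. c * k y) cs ys = map2 (\<lambda>c y. c * k' y) cs ys"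
proof (induction ys arbitrary: cs)
  case Nil then show ?case by simp
next
  case (Cons y ys)
  have "k y = k' y" using Cons.prems by simp
  moreover have "map2 (\<lambda>c y. c * k y) cs' ys = map2 (\<lambda>c y. c * k' y) cs' ys" for cs'
    using Cons.IH Cons.prems by simp
  ultimately show ?case by (cases cs) simp_all
qed

lemma main_iso:
  fixes S :: "'a::{ab_group_add,finite} set" and \<phi> :: "'a \<Rightarrow> nat"
  assumes zero: "0 \<notin> S" and sym: "\<forall>s\<in>S. - s \<in> S" and bij: "bij_betw \<phi> UNIV {..<18}"
    and adjS: "\<And>x y. (y - x \<in> S) \<longleftrightarrow> adj (\<phi> x) (\<phi> y)"
  shows "H_flows S = E_flows S"
proof
  have adjS2: "adj (\<phi> x) (\<phi> y) \<longleftrightarrow> (y - x \<in> S)" for x y using adjS by simp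
  define \<psi> where "\<psi> = inv_into UNIV \<phi>"
  have \<phi>\<psi>: "\<phi> (\<psi> i) = i" if "i < 18" for i
    using bij_betw_inv_into_right[OF bij] that unfolding \<psi>_def by simp
  have inj: "inj \<phi>" using bij by (simp add: bij_betw_def)
  have \<psi>\<phi>: "\<psi> (\<phi> x) = x" for x unfolding \<psi>_def using inj by simp
  have \<phi>lt: "\<phi> x < 18" for x using bij by (auto simp: bij_betw_def)
  have \<psi>inj: "i = j" if "i < 18" "j < 18" "\<psi> i = \<psi> j" for i j
  proof -
    have "\<phi> (\<psi> i) = \<phi> (\<psi> j)" using that(3) by simp
    then show "i = j" using \<phi>\<psi> that(1,2) by simp
  qed
  have cardU: "card (UNIV :: 'a set) = 18" using bij_betw_same_card[OF bij] by simp
  have adjS': "\<psi> j - \<psi> i \<in> S" if "adj i j" for i j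
    using adjS2[of "\<psi> i" "\<psi> j"] adj_lt[OF that] \<phi>\<psi> that by simp

  show "H_flows S \<subseteq> E_flows S"
    unfolding H_flows_def
  proof
    fix f assume "f \<in> int_span {cycle_flow vs |vs. ham_cycle S vs}"
    then show "f \<in> E_flows S"
    proof (induction rule: int_span.induct)
      case zero
      have "edge_flow S (\<lambda>v s. 0) e = 0" for e by (simp add: edge_flow_def Let_def)
      then show ?case by (simp add: E_flows_def is_flow_def)
    next
      case (gen c)
      then obtain vs where c: "c = cycle_flow vs" and h: "ham_cycle S vs" by blast
      have "length vs = 18"
        using h cardU distinct_card[of vs] by (simp add: ham_cycle_def)
      then show ?case using ham_flow[OF h sym] ham_even[OF h] c by (simp add: E_flows_def)
    next
      case (add f g)
      have ff: "is_flow S f" "is_flow S g" using add by (auto simp: E_flows_def)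
      have fl: "is_flow S (\<lambda>v s. f v s + g v s)"
        unfolding is_flow_def
      proof (intro conjI allI ballI impI)
        fix v s assume "s \<notin> S"
        then have "f v s = 0" "g v s = 0" using ff unfolding is_flow_def by blast+
        then show "f v s + g v s = 0" by simp
      next
        fix v s assume "s \<in> S"
        then have "f v s = - f (v + s) (- s)" "g v s = - g (v + s) (- s)" using ff unfolding is_flow_def by blast+
        then show "f v s + g v s = - (f (v + s) (- s) + g (v + s) (- s))" by simp
      next
        fix v
        have "sum (f v) S = 0" "sum (g v) S = 0" using ff unfolding is_flow_def by blast+
        then show "(\<Sum>s\<in>S. f v s + g v s) = 0" by (simp add: sum.distrib)
      qed
      have ef: "edge_flow S (\<lambda>v s. f v s + g v s) e = edge_flow S f e + edge_flow S g e" for e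
        by (simp add: edge_flow_def Let_def)
      show ?case using add fl by (simp add: E_flows_def ef sum.distrib)
    next
      case (neg f)
      have ff: "is_flow S f" using neg by (auto simp: E_flows_def)
      have fl: "is_flow S (\<lambda>v s. - f v s)"
        unfolding is_flow_def
      proof (intro conjI allI ballI impI)
        fix v s assume "s \<notin> S"
        then have "f v s = 0" using ff unfolding is_flow_def by blast
        then show "- f v s = 0" by simp
      next
        fix v s assume "s \<in> S"
        then have "f v s = - f (v + s) (- s)" using ff unfolding is_flow_def by blast
        then show "- f v s = - (- f (v + s) (- s))" by simp
      next
        fix v
        have "sum (f v) S = 0" using ff unfolding is_flow_def by blast
        then show "(\<Sum>s\<in>S. - f v s) = 0" by (simp add: sum_negf)
      qed
      have ef: "edge_flow S (\<lambda>v s. - f v s) e = - edge_flow S f e" for e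
        by (simp add: edge_flow_def Let_def)
      show ?case using neg fl by (simp add: E_flows_def ef sum_negf)
    qed
  qed

  show "E_flows S \<subseteq> H_flows S"
  proof
    fix f assume fE: "f \<in> E_flows S"
    then have fl: "is_flow S f" and ev: "even (\<Sum>e\<in>cayley_edges S. edge_flow S f e)"
      by (auto simp: E_flows_def)
    define F where "F i j = f (\<psi> i) (\<psi> j - \<psi> i)" for i j
    have anti: "F i j = - F j i" if "adj i j" for i j
    proof -
      have s: "\<psi> j - \<psi> i \<in> S" using adjS'[OF that] .
      have "f (\<psi> i) (\<psi> j - \<psi> i) = - f (\<psi> i + (\<psi> j - \<psi> i)) (- (\<psi> j - \<psi> i))"
        using fl s unfolding is_flow_def by blast
      then show ?thesis unfolding F_def by simp
    qed
    have cons: "sum_list (map (F i) (nbrs i)) = 0" if i: "i < 18" for i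
    proof -
      have "sum_list (map (F i) (nbrs i)) = sum (F i) (set (nbrs i))"
        using nbrs_dist[OF i] by (simp add: sum_list_distinct_conv_sum_set)
      also have "\<dots> = sum (\<lambda>j. f (\<psi> i) (\<psi> j - \<psi> i)) (set (nbrs i))" unfolding F_def ..
      also have "\<dots> = sum (f (\<psi> i)) S"
      proof (rule sum.reindex_bij_betw)
        show "bij_betw (\<lambda>j. \<psi> j - \<psi> i) (set (nbrs i)) S"
        proof (rule bij_betw_imageI)
          show "inj_on (\<lambda>j. \<psi> j - \<psi> i) (set (nbrs i))"
            using \<psi>inj nbrs_lt[OF i] by (auto intro!: inj_onI)
          show "(\<lambda>j. \<psi> j - \<psi> i) ` set (nbrs i) = S"
          proof
            show "(\<lambda>j. \<psi> j - \<psi> i) ` set (nbrs i) \<subseteq> S" using adjS' i by (auto simp: adj_def)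
            show "S \<subseteq> (\<lambda>j. \<psi> j - \<psi> i) ` set (nbrs i)"
            proof
              fix s assume s: "s \<in> S"
              have "adj (\<phi> (\<psi> i)) (\<phi> (\<psi> i + s))" using adjS2[of "\<psi> i" "\<psi> i + s"] s by simp
              then have "\<phi> (\<psi> i + s) \<in> set (nbrs i)" using \<phi>\<psi>[OF i] by (simp add: adj_def)
              moreover have "s = \<psi> (\<phi> (\<psi> i + s)) - \<psi> i" by (simp add: \<psi>\<phi>)
              ultimately show "s \<in> (\<lambda>j. \<psi> j - \<psi> i) ` set (nbrs i)" by blast
            qed
          qed
        qed
      qed
      also have "\<dots> = 0" using fl unfolding is_flow_def by blast
      finally show ?thesis .
    qed
    have par: "even (sum_list (map (\<lambda>(i, j). F i j) edgelist))"
    proof -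
      let ?h = "\<lambda>(i, j). {\<psi> i, \<psi> j}"
      have ce: "cayley_edges S = ?h ` set edgelist"
      proof
        show "cayley_edges S \<subseteq> ?h ` set edgelist"
        proof
          fix e assume "e \<in> cayley_edges S"
          then obtain g s where e: "e = {g, g + s}" and s: "s \<in> S" by (auto simp: cayley_edges_def)
          have a1: "adj (\<phi> g) (\<phi> (g + s))" using adjS2[of g "g + s"] s by simp
          have a2: "adj (\<phi> (g + s)) (\<phi> g)" using adjS2[of "g + s" g] s sym by force
          have ne: "\<phi> g \<noteq> \<phi> (g + s)"
          proof
            assume "\<phi> g = \<phi> (g + s)"
            then have "g = g + s" using inj by (simp add: inj_eq)
            then have "s = 0" by simp
            then show False using zero s by simp
          qed
          show "e \<in> ?h ` set edgelist"
          proof (cases "\<phi> g < \<phi> (g + s)")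
            case True
            then have "(\<phi> g, \<phi> (g + s)) \<in> set edgelist" using EL2 a1 by blast
            moreover have "e = ?h (\<phi> g, \<phi> (g + s))" using e by (simp add: \<psi>\<phi>)
            ultimately show ?thesis by blast
          next
            case False
            then have "\<phi> (g + s) < \<phi> g" using ne by simp
            then have "(\<phi> (g + s), \<phi> g) \<in> set edgelist" using EL2 a2 by blast
            moreover have "e = ?h (\<phi> (g + s), \<phi> g)" using e by (auto simp: \<psi>\<phi>)
            ultimately show ?thesis by blast
          qed
        qed
        show "?h ` set edgelist \<subseteq> cayley_edges S"
        proof
          fix e assume "e \<in> ?h ` set edgelist"
          then obtain i j where ij: "(i, j) \<in> set edgelist" and e: "e = {\<psi> i, \<psi> j}" by auto
          have "\<psi> j - \<psi> i \<in> S" using adjS' EL1[OF ij] by blast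
          moreover have "e = {\<psi> i, \<psi> i + (\<psi> j - \<psi> i)}" using e by simp
          ultimately show "e \<in> cayley_edges S" unfolding cayley_edges_def by blast
        qed
      qed
      have hi: "inj_on ?h (set edgelist)"
      proof (rule inj_onI)
        fix p q assume p: "p \<in> set edgelist" and q: "q \<in> set edgelist" and eq: "?h p = ?h q"
        obtain i j where pij: "p = (i, j)" by (cases p)
        obtain i' j' where qij: "q = (i', j')" by (cases q)
        have l: "i < j" "adj i j" "i' < j'" "adj i' j'" using EL1 p q pij qij by auto
        have l2: "i < 18" "j < 18" "i' < 18" "j' < 18" using adj_lt l by auto
        have "{\<psi> i, \<psi> j} = {\<psi> i', \<psi> j'}" using eq pij qij by simp
        then have "(\<psi> i = \<psi> i' \<and> \<psi> j = \<psi> j') \<or> (\<psi> i = \<psi> j' \<and> \<psi> j = \<psi> i')"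
          by (simp add: doubleton_eq_iff)
        then have "(i = i' \<and> j = j') \<or> (i = j' \<and> j = i')" using \<psi>inj l2 by blast
        then show "p = q" using l pij qij by auto
      qed
      have "(\<Sum>e\<in>cayley_edges S. edge_flow S f e) = (\<Sum>p\<in>set edgelist. edge_flow S f (?h p))"
        unfolding ce sum.reindex[OF hi] o_def by (rule refl)
      also have "\<dots> = sum_list (map (\<lambda>p. edge_flow S f (?h p)) edgelist)"
        using EL3 by (simp add: sum_list_distinct_conv_sum_set)
      finally have s1: "even (sum_list (map (\<lambda>p. edge_flow S f (?h p)) edgelist))" using ev by simp
      have "\<forall>p\<in>set edgelist. even (edge_flow S f (?h p) - (\<lambda>(i, j). F i j) p)"
      proof
        fix p assume p: "p \<in> set edgelist"
        obtain i j where pij: "p = (i, j)" by (cases p)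
        have ij: "(i, j) \<in> set edgelist" using p pij by simp
        have mem: "?h p \<in> cayley_edges S" unfolding ce using p by blast
        obtain p1 p2 where pp: "?h p = {p1, p2}" "p2 - p1 \<in> S" "\<forall>f. edge_flow S f (?h p) = f p1 (p2 - p1)"
          using edge_flow_ex[OF mem] by blast
        have "{\<psi> i, \<psi> j} = {p1, p2}" using pp(1) pij by simp
        then have "(p1 = \<psi> i \<and> p2 = \<psi> j) \<or> (p1 = \<psi> j \<and> p2 = \<psi> i)" by (auto simp: doubleton_eq_iff)
        then have "edge_flow S f (?h p) = F i j \<or> edge_flow S f (?h p) = F j i"
          using pp(3) unfolding F_def by auto
        moreover have "F j i = - F i j" using anti EL1[OF ij] by simp
        ultimately show "even (edge_flow S f (?h p) - (\<lambda>(i, j). F i j) p)" using pij by auto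
      qed
      then have "even (sum_list (map (\<lambda>p. edge_flow S f (?h p)) edgelist)) = even (sum_list (map (\<lambda>(i, j). F i j) edgelist))"
        by (rule even_sum_list_cong)
      then show ?thesis using s1 by simp
    qed
    obtain cs where cs: "\<forall>i j. adj i j \<longrightarrow> F i j = sum_list (map2 (\<lambda>c cy. c * ccf cy i j) cs cycles)"
      using core[of F, OF anti cons par] by blast
    define gs where "gs = map (\<lambda>cy. cycle_flow (map \<psi> cy)) cycles"
    have hc: "ham_cycle S (map \<psi> cy)" if cy: "cy \<in> set cycles" for cy
    proof -
      note c = CY[OF cy]
      have "inj_on \<psi> (set cy)" using c \<psi>inj by (auto intro!: inj_onI)
      then have d: "distinct (map \<psi> cy)" using c by (simp add: distinct_map)
      have u: "set (map \<psi> cy) = UNIV"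
      proof -
        have "x \<in> \<psi> ` set cy" for x
        proof -
          have "\<phi> x \<in> set cy" using c \<phi>lt[of x] by simp
          then have "\<psi> (\<phi> x) \<in> \<psi> ` set cy" by blast
          then show ?thesis by (simp add: \<psi>\<phi>)
        qed
        then show ?thesis by auto
      qed
      have e: "(map \<psi> cy) ! ((t + 1) mod length (map \<psi> cy)) - (map \<psi> cy) ! t \<in> S"
        if t: "t < length (map \<psi> cy)" for t
        using adjS'[of "cy ! t" "cy ! (Suc t mod 18)"] c t by simp
      show ?thesis unfolding ham_cycle_def using d u e c by simp
    qed
    have fwm: "fw (map \<psi> cy) a b \<longleftrightarrow> fw cy (\<phi> a) (\<phi> b)" if cy: "cy \<in> set cycles" for cy a b
    proof -
      note c = CY[OF cy]
      have lt: "cy ! i < 18" if "i < 18" for i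
      proof -
        have l: "i < length cy" using c that by simp
        have "cy ! i \<in> set cy" by (rule nth_mem[OF l])
        then show ?thesis using c by simp
      qed
      have eq: "(a = \<psi> (cy ! i)) \<longleftrightarrow> (\<phi> a = cy ! i)" if "i < 18" for i a
      proof
        assume "a = \<psi> (cy ! i)" then show "\<phi> a = cy ! i" using \<phi>\<psi>[OF lt[OF that]] by simp
      next
        assume "\<phi> a = cy ! i" then have "\<psi> (\<phi> a) = \<psi> (cy ! i)" by simp
        then show "a = \<psi> (cy ! i)" by (simp add: \<psi>\<phi>)
      qed
      have lt2: "Suc i mod 18 < 18" for i :: nat by simp
      have pt: "(a = \<psi> (cy ! i) \<and> b = \<psi> (cy ! (Suc i mod 18))) \<longleftrightarrow> (\<phi> a = cy ! i \<and> \<phi> b = cy ! (Suc i mod 18))"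
        if "i < 18" for i using eq[OF that, of a] eq[OF lt2[of i], of b] by blast
      have "fw (map \<psi> cy) a b \<longleftrightarrow> (\<exists>i<18. a = \<psi> (cy ! i) \<and> b = \<psi> (cy ! (Suc i mod 18)))"
        unfolding fw_nth using c lt2 by auto
      also have "\<dots> \<longleftrightarrow> (\<exists>i<18. \<phi> a = cy ! i \<and> \<phi> b = cy ! (Suc i mod 18))" using pt by blast
      also have "\<dots> \<longleftrightarrow> fw cy (\<phi> a) (\<phi> b)" unfolding fw_nth using c by simp
      finally show ?thesis .
    qed
    have cfv: "cycle_flow (map \<psi> cy) x s = ccf cy (\<phi> x) (\<phi> (x + s))" if cy: "cy \<in> set cycles" for cy x s
      unfolding cf_eq ccf_def fwm[OF cy] fw_def[symmetric] by simp
    have feq: "f = (\<lambda>v s. sum_list (map2 (\<lambda>c g. c * g v s) cs gs))"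
    proof (intro ext)
      fix x s
      show "f x s = sum_list (map2 (\<lambda>c g. c * g x s) cs gs)"
      proof (cases "s \<in> S")
        case False
        have "f x s = 0" using fl False unfolding is_flow_def by blast
        moreover have "\<forall>g\<in>set gs. g x s = 0"
        proof
          fix g assume "g \<in> set gs"
          then obtain cy where cy: "cy \<in> set cycles" "g = cycle_flow (map \<psi> cy)" unfolding gs_def by auto
          show "g x s = 0" using ham_flow[OF hc[OF cy(1)] sym] False cy(2) unfolding is_flow_def by blast
        qed
        then have "\<forall>y\<in>set (zip cs gs). (\<lambda>(c, g). c * g x s) y = 0" by (auto dest: set_zip_rightD)
        then have "sum_list (map2 (\<lambda>c g. c * g x s) cs gs) = 0" by (rule sl0)
        ultimately show ?thesis by simp
      next
        case True
        have a: "adj (\<phi> x) (\<phi> (x + s))" using adjS2[of x "x + s"] True by simp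
        have "f x s = F (\<phi> x) (\<phi> (x + s))" unfolding F_def by (simp add: \<psi>\<phi>)
        also have "\<dots> = sum_list (map2 (\<lambda>c cy. c * ccf cy (\<phi> x) (\<phi> (x + s))) cs cycles)" using cs a by blast
        also have "\<dots> = sum_list (map2 (\<lambda>c cy. c * cycle_flow (map \<psi> cy) x s) cs cycles)"
        proof -
          have mc: "map2 (\<lambda>c cy. c * ccf cy (\<phi> x) (\<phi> (x + s))) cs cycles = map2 (\<lambda>c cy. c * cycle_flow (map \<psi> cy) x s) cs cycles"
            by (rule map2_cong_right) (simp add: cfv)
          show ?thesis by (simp only: mc)
        qed
        also have "\<dots> = sum_list (map2 (\<lambda>c g. c * g x s) cs gs)"
          unfolding gs_def map2_map_right by simp
        finally show ?thesis .
      qed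
    qed
    have gsub: "set gs \<subseteq> {cycle_flow vs |vs. ham_cycle S vs}" using hc unfolding gs_def by auto
    show "f \<in> H_flows S" unfolding H_flows_def feq by (rule int_span_lc[OF gsub])
  qed
qed



definition PSlist :: "((nat \<times> nat) \<times> nat) list" where
  "PSlist = List.product (List.product [0..<3] [0..<3]) [0..<2]"

definition penc :: "(nat \<times> nat) \<times> nat \<Rightarrow> nat" where
  "penc p = enc3 (fst (fst p)) (snd (fst p)) (snd p)"

lemma iso_phi:
  fixes S :: "'a::{ab_group_add,finite} set"
  assumes "graph_iso (cayley_graph S)
           (cart_prod_graph (cart_prod_graph (complete_graph 3) (complete_graph 3)) (complete_graph 2))"
  shows "\<exists>\<phi>. bij_betw \<phi> UNIV {..<18} \<and> (\<forall>x y. (y - x \<in> S) \<longleftrightarrow> adj (\<phi> x) (\<phi> y))"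
proof -
  define Gc where "Gc = cart_prod_graph (cart_prod_graph (complete_graph 3) (complete_graph 3)) (complete_graph 2)"
  obtain \<phi>0 where b0: "bij_betw \<phi>0 UNIV (fst Gc)"
    and a0: "\<forall>x\<in>UNIV. \<forall>y\<in>UNIV. (y - x \<in> S) \<longleftrightarrow> snd Gc (\<phi>0 x) (\<phi>0 y)"
    using assms unfolding graph_iso_def cayley_graph_def Gc_def by auto
  have fG: "fst Gc = set PSlist"
    by (simp add: Gc_def cart_prod_graph_def complete_graph_def PSlist_def atLeast0LessThan)
  have g1: "distinct (map penc PSlist) \<and> set (map penc PSlist) = set [0..<18]" by code_simp
  have g2: "list_all (\<lambda>p. list_all (\<lambda>q. snd (cart_prod_graph (cart_prod_graph (complete_graph 3) (complete_graph 3)) (complete_graph 2)) p q = adj (penc p) (penc q)) PSlist) PSlist"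
    by code_simp
  have bp: "bij_betw penc (set PSlist) {..<18}"
    unfolding bij_betw_def using g1 by (simp add: distinct_map atLeast0LessThan)
  have b: "bij_betw (penc \<circ> \<phi>0) UNIV {..<18}"
    using b0 bp unfolding fG by (rule bij_betw_trans)
  have "(y - x \<in> S) \<longleftrightarrow> adj ((penc \<circ> \<phi>0) x) ((penc \<circ> \<phi>0) y)" for x y
  proof -
    have m: "\<phi>0 x \<in> set PSlist" "\<phi>0 y \<in> set PSlist" using b0 fG by (auto simp: bij_betw_def)
    have "(y - x \<in> S) \<longleftrightarrow> snd Gc (\<phi>0 x) (\<phi>0 y)" using a0 by blast
    also have "\<dots> \<longleftrightarrow> adj (penc (\<phi>0 x)) (penc (\<phi>0 y))" using g2 m unfolding Gc_def by (auto simp: list_all_iff)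
    finally show ?thesis by simp
  qed
  then show ?thesis using b by blast
qed

theorem corollary10p6:
  fixes S :: "'a::{ab_group_add,finite} set"
  assumes "0 \<notin> S"
    and "\<forall>s\<in>S. - s \<in> S"
    and "graph_iso (cayley_graph S)
           (cart_prod_graph (cart_prod_graph (complete_graph 3) (complete_graph 3)) (complete_graph 2))"
  shows "H_flows S = E_flows S"
proof -
  obtain \<phi> where b: "bij_betw \<phi> UNIV {..<18}" and a: "\<forall>x y. (y - x \<in> S) \<longleftrightarrow> adj (\<phi> x) (\<phi> y)"
    using iso_phi[OF assms(3)] by blast
  show ?thesis using main_iso[OF assms(1) assms(2) b] a by blast
qed

end
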